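(* Let $F$ be a once-punctured torus equipped with a point of the decorated super Teichmüller space $S\tilde T(F)$ with values in the Grassmann algebra $\mathbb{R}_{S[N]}$. For every $\delta>0$ there exists a constant $M=M_{\delta}\geq 1$ (depending on $\delta$ and the point) such that \[ \|s(a)\|\leq M\cdot|\epsilon(a)|^{1+\delta} \] for the super $\lambda$-length $a$ of every ideal arc of $F$.
   Context: $\mathbb{R}_{S[N]}$ is the real Grassmann algebra generated by anticommuting $\beta_{[1]},\dots,\beta_{[N]}$; each $x$ is $\sum_\lambda x_\lambda\beta_{[\lambda]}$ over increasing multi-indices, the body $\epsilon(x)$ is the coefficient of $1$, the soul is $s(x)=x-\epsilon(x)\cdot1$, and $\|x\|=\sum_\lambda|x_\lambda|$. $S\tilde T(F)$ is the decorated $\mathrm{OSp}(1|2)$ super Teichmüller space (Penner–Zeitlin): a point assigns to every ideal arc of $F$ an even super $\lambda$-length with positive body, to the triangles of each ideal triangulation odd $\mu$-invariants, together with a spin structure; $\lambda$-lengths of the arcs of a triangulation $a,b,c$ and of the arc $d$ obtained by flipping $c$ satisfy $cd=a^2+b^2+abW_c$, with $W_c$ the product of the $\mu$-invariants of the two triangles adjacent to $c$ (ordered counter-clockwise then clockwise relative to the spin orientation of $c$). *)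

theory Defs
  imports Complex_Main
begin

text \<open>An element x = sum_lambda x_lambda beta_[lambda] is encoded by its coefficient function
  on multi-indices; a strictly increasing multi-index is encoded by the finite set of its
  entries (a subset of {1..N}).\<close>

type_synonym grass = "nat set \<Rightarrow> real"

definition in_grass :: "nat \<Rightarrow> grass \<Rightarrow> bool" where
  "in_grass N x \<longleftrightarrow> (\<forall>A. x A \<noteq> 0 \<longrightarrow> A \<subseteq> {1..N})"

text \<open>Sign of beta_[B] * beta_[C] = sign * beta_[B union C] for disjoint B, C:
  one transposition for every pair (i in B, j in C) with j < i.\<close>
definition gsign :: "nat set \<Rightarrow> nat set \<Rightarrow> real" where
  "gsign B C = (-1) ^ card {(i, j). i \<in> B \<and> j \<in> C \<and> j < i}"

definition gmul :: "nat \<Rightarrow> grass \<Rightarrow> grass \<Rightarrow> grass" where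
  "gmul N x y = (\<lambda>A. if A \<subseteq> {1..N}
      then (\<Sum>B\<in>Pow A. gsign B (A - B) * x B * y (A - B)) else 0)"

definition gadd :: "grass \<Rightarrow> grass \<Rightarrow> grass" where
  "gadd x y = (\<lambda>A. x A + y A)"

definition gscale :: "real \<Rightarrow> grass \<Rightarrow> grass" where
  "gscale r x = (\<lambda>A. r * x A)"

definition body :: "grass \<Rightarrow> real" where
  "body x = x {}"

definition soul :: "grass \<Rightarrow> grass" where
  "soul x = x({} := 0)"

definition gnorm :: "nat \<Rightarrow> grass \<Rightarrow> real" where
  "gnorm N x = (\<Sum>A\<in>Pow {1..N}. \<bar>x A\<bar>)"

definition is_even :: "nat \<Rightarrow> grass \<Rightarrow> bool" where
  "is_even N x \<longleftrightarrow> in_grass N x \<and> (\<forall>A. odd (card A) \<longrightarrow> x A = 0)"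

definition is_odd :: "nat \<Rightarrow> grass \<Rightarrow> bool" where
  "is_odd N x \<longleftrightarrow> in_grass N x \<and> (\<forall>A. even (card A) \<longrightarrow> x A = 0)"

text \<open>After fixing a marking H_1(F) = Z^2, ideal arcs of the once-punctured torus correspond
  to slopes, i.e. primitive vectors (m,n) up to sign; we normalise n > 0 or (m,n) = (1,0).
  Two arcs are disjoint (can occur in a common triangulation) iff |m n' - n m'| = 1, and
  ideal triangulations are triples of pairwise disjoint arcs (Farey triangles).\<close>

type_synonym arc = "int \<times> int"

definition is_arc :: "arc \<Rightarrow> bool" where
  "is_arc a \<longleftrightarrow> coprime (fst a) (snd a) \<and> (snd a > 0 \<or> (snd a = 0 \<and> fst a = 1))"

definition arcs_adjacent :: "arc \<Rightarrow> arc \<Rightarrow> bool" where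
  "arcs_adjacent a b \<longleftrightarrow> \<bar>fst a * snd b - snd a * fst b\<bar> = 1"

definition is_triangulation :: "arc \<Rightarrow> arc \<Rightarrow> arc \<Rightarrow> bool" where
  "is_triangulation a b c \<longleftrightarrow> is_arc a \<and> is_arc b \<and> is_arc c \<and>
     arcs_adjacent a b \<and> arcs_adjacent b c \<and> arcs_adjacent a c"

text \<open>Spin structures on the torus are the quadratic forms q on H_1(F;Z/2) with respect to the
  mod 2 intersection form; they are exactly q(m,n) = al*m + be*n + m*n (mod 2) for al, be in Z/2.
  The spin orientation of an arc c in a triangulation relative to the two triangles is
  recorded (up to the overall gauge of reversing all orientations at a triangle, which is
  absorbed in the sign of the mu-invariants) by the sign (-1)^q(c).\<close>

definition spin_q :: "bool \<Rightarrow> bool \<Rightarrow> arc \<Rightarrow> bool" where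
  "spin_q al be a = ((al \<and> odd (fst a)) \<noteq> ((be \<and> odd (snd a)) \<noteq> (odd (fst a) \<and> odd (snd a))))"

definition spin_sign :: "bool \<Rightarrow> bool \<Rightarrow> arc \<Rightarrow> real" where
  "spin_sign al be a = (if spin_q al be a then -1 else 1)"

text \<open>A point: super lambda-lengths lam (even, positive body) on all arcs; odd mu-invariants
  mu1 T, mu2 T of the two triangles of every triangulation T (given as a set of arcs);
  a spin structure (al, be); and the super Ptolemy relation c d = a^2 + b^2 + a b W_c for
  every flip of c in the triangulation {a,b,c} to d, where W_c is the product of the two
  mu-invariants, ordered according to the spin orientation of c.\<close>

definition W_inv :: "nat \<Rightarrow> (arc set \<Rightarrow> grass) \<Rightarrow> (arc set \<Rightarrow> grass) \<Rightarrow> bool \<Rightarrow> bool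
    \<Rightarrow> arc \<Rightarrow> arc \<Rightarrow> arc \<Rightarrow> grass" where
  "W_inv N mu1 mu2 al be a b c =
     gscale (spin_sign al be c) (gmul N (mu1 {a, b, c}) (mu2 {a, b, c}))"

definition super_teich_point :: "nat \<Rightarrow> (arc \<Rightarrow> grass) \<Rightarrow> (arc set \<Rightarrow> grass)
    \<Rightarrow> (arc set \<Rightarrow> grass) \<Rightarrow> bool \<Rightarrow> bool \<Rightarrow> bool" where
  "super_teich_point N lam mu1 mu2 al be \<longleftrightarrow>
     (\<forall>a. is_arc a \<longrightarrow> is_even N (lam a) \<and> body (lam a) > 0) \<and>
     (\<forall>a b c. is_triangulation a b c \<longrightarrow>
         is_odd N (mu1 {a, b, c}) \<and> is_odd N (mu2 {a, b, c})) \<and>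
     (\<forall>a b c d. is_triangulation a b c \<and> is_triangulation a b d \<and> c \<noteq> d \<longrightarrow>
         gmul N (lam c) (lam d) =
           gadd (gadd (gmul N (lam a) (lam a)) (gmul N (lam b) (lam b)))
                (gmul N (gmul N (lam a) (lam b)) (W_inv N mu1 mu2 al be a b c)))"

end

theory Submission
  imports Defs
begin


definition vadd :: "int\<times>int \<Rightarrow> int\<times>int \<Rightarrow> int\<times>int" where
  "vadd x y = (fst x + fst y, snd x + snd y)"
definition vsub :: "int\<times>int \<Rightarrow> int\<times>int \<Rightarrow> int\<times>int" where
  "vsub x y = (fst x - fst y, snd x - snd y)"
definition vneg :: "int\<times>int \<Rightarrow> int\<times>int" where
  "vneg x = (- fst x, - snd x)"
definition sz :: "int\<times>int \<Rightarrow> int" where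
  "sz x = fst x + snd x"

lemma vsub_vadd1[simp]: "vsub u (vadd u v) = vneg v"
  by (simp add: vsub_def vadd_def vneg_def)
lemma vsub_vadd2[simp]: "vsub (vadd u v) v = u"
  by (simp add: vsub_def vadd_def vneg_def)
lemma sz_vadd[simp]: "sz (vadd u v) = sz u + sz v"
  by (simp add: sz_def vadd_def)

inductive sbn :: "int\<times>int \<Rightarrow> int\<times>int \<Rightarrow> bool" where
  root: "sbn (1,0) (0,1)"
| lft: "sbn u v \<Longrightarrow> sbn u (vadd u v)"
| rgt: "sbn u v \<Longrightarrow> sbn (vadd u v) v"

lemma sbn_sz: "sbn u v \<Longrightarrow> sz u \<ge> 1 \<and> sz v \<ge> 1"
  by (induction rule: sbn.induct) (auto simp: sz_def vadd_def)

locale rl0 =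
  fixes E :: "int\<times>int \<Rightarrow> real"
  assumes Epos: "\<And>x. E x > 0"
    and Eneg: "\<And>x. E (vneg x) = E x"
    and ptol: "\<And>u v. sbn u v \<Longrightarrow> E (vadd u v) * E (vsub u v) = (E u)\<^sup>2 + (E v)\<^sup>2"
    and asc0: "E (vsub (1,0) (0,1)) \<le> E (vadd (1,0) (0,1))"
begin

lemma Enz: "E x \<noteq> 0" using Epos[of x] by simp

definition h :: real where
  "h = ((E (1,0))\<^sup>2 + (E (0,1))\<^sup>2 + (E (vsub (1,0) (0,1)))\<^sup>2) /
        (E (1,0) * E (0,1) * E (vsub (1,0) (0,1)))"

lemma markov_inv: "sbn u v \<Longrightarrow>
   (E u)\<^sup>2 + (E v)\<^sup>2 + (E (vsub u v))\<^sup>2 = h * E u * E v * E (vsub u v)"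
proof (induction rule: sbn.induct)
  case root
  have "E (1,0) \<noteq> 0" "E (0,1) \<noteq> 0" "E (vsub (1,0) (0,1)) \<noteq> 0" using Enz by auto
  then show ?case unfolding h_def by (simp add: field_simps)
next
  case (lft u v)
  have p: "E (vadd u v) * E (vsub u v) = (E u)\<^sup>2 + (E v)\<^sup>2" using ptol lft.hyps by blast
  have r: "E (vsub u v) > 0" using Epos by blast
  have lin: "E (vadd u v) + E (vsub u v) = h * E u * E v"
  proof -
    have "E (vsub u v) * (E (vadd u v) + E (vsub u v)) = E (vsub u v) * (h * E u * E v)"
      using p lft.IH by (simp add: algebra_simps power2_eq_square)
    then show ?thesis using r by simp
  qed
  have "(E u)\<^sup>2 + (E (vadd u v))\<^sup>2 + (E v)\<^sup>2 = h * E u * E (vadd u v) * E v"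
  proof -
    have "(E u)\<^sup>2 + (E (vadd u v))\<^sup>2 + (E v)\<^sup>2 = E (vadd u v) * (E (vadd u v) + E (vsub u v))"
      using p by (simp add: power2_eq_square distrib_left)
    also have "\<dots> = h * E u * E (vadd u v) * E v" using lin by (simp add: mult_ac)
    finally show ?thesis .
  qed
  then show ?case by (simp add: Eneg)
next
  case (rgt u v)
  have p: "E (vadd u v) * E (vsub u v) = (E u)\<^sup>2 + (E v)\<^sup>2" using ptol rgt.hyps by blast
  have r: "E (vsub u v) > 0" using Epos by blast
  have lin: "E (vadd u v) + E (vsub u v) = h * E u * E v"
  proof -
    have "E (vsub u v) * (E (vadd u v) + E (vsub u v)) = E (vsub u v) * (h * E u * E v)"
      using p rgt.IH by (simp add: algebra_simps power2_eq_square)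
    then show ?thesis using r by simp
  qed
  have "(E (vadd u v))\<^sup>2 + (E v)\<^sup>2 + (E u)\<^sup>2 = h * E (vadd u v) * E v * E u"
  proof -
    have "(E (vadd u v))\<^sup>2 + (E v)\<^sup>2 + (E u)\<^sup>2 = E (vadd u v) * (E (vadd u v) + E (vsub u v))"
      using p by (simp add: power2_eq_square distrib_left)
    also have "\<dots> = h * E (vadd u v) * E v * E u" using lin by (simp add: mult_ac)
    finally show ?thesis .
  qed
  then show ?case by simp
qed

lemma lin: "sbn u v \<Longrightarrow> E (vadd u v) + E (vsub u v) = h * E u * E v"
proof -
  assume a: "sbn u v"
  have p: "E (vadd u v) * E (vsub u v) = (E u)\<^sup>2 + (E v)\<^sup>2" using ptol a by blast
  have r: "E (vsub u v) > 0" using Epos by blast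
  have "E (vsub u v) * (E (vadd u v) + E (vsub u v)) = E (vsub u v) * (h * E u * E v)"
    using p markov_inv[OF a] by (simp add: algebra_simps power2_eq_square)
  then show ?thesis using r by simp
qed

lemma asc: "sbn u v \<Longrightarrow> E (vsub u v) \<le> E (vadd u v)"
proof (induction rule: sbn.induct)
  case root
  then show ?case using asc0 by simp
next
  case (lft u v)
  have p: "E (vadd u v) * E (vsub u v) = (E u)\<^sup>2 + (E v)\<^sup>2" using ptol lft.hyps by blast
  have p2: "E (vadd u (vadd u v)) * E v = (E u)\<^sup>2 + (E (vadd u v))\<^sup>2"
    using ptol[OF sbn.lft[OF lft.hyps]] by (simp add: Eneg)
  have "(E v)\<^sup>2 \<le> (E (vadd u v))\<^sup>2"
  proof -
    have "(E (vsub u v)) * E (vadd u v) \<le> E (vadd u v) * E (vadd u v)"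
      using lft.IH Epos[of "vadd u v"] by (simp add: mult_right_mono)
    then have "(E u)\<^sup>2 + (E v)\<^sup>2 \<le> (E (vadd u v))\<^sup>2" using p by (simp add: power2_eq_square mult.commute)
    then show ?thesis by (smt (verit) zero_le_power2)
  qed
  then have "E v * E v \<le> E (vadd u (vadd u v)) * E v" using p2 by (smt (verit) zero_le_power2 power2_eq_square)
  then show ?case using Epos[of v] by (simp add: Eneg)
next
  case (rgt u v)
  have p: "E (vadd u v) * E (vsub u v) = (E u)\<^sup>2 + (E v)\<^sup>2" using ptol rgt.hyps by blast
  have p2: "E (vadd (vadd u v) v) * E u = (E (vadd u v))\<^sup>2 + (E v)\<^sup>2"
    using ptol[OF sbn.rgt[OF rgt.hyps]] by simp
  have "(E u)\<^sup>2 \<le> (E (vadd u v))\<^sup>2"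
  proof -
    have "(E (vsub u v)) * E (vadd u v) \<le> E (vadd u v) * E (vadd u v)"
      using rgt.IH Epos[of "vadd u v"] by (simp add: mult_right_mono)
    then have "(E u)\<^sup>2 + (E v)\<^sup>2 \<le> (E (vadd u v))\<^sup>2" using p by (simp add: power2_eq_square mult.commute)
    then show ?thesis by (smt (verit) zero_le_power2)
  qed
  then have "E u * E u \<le> E (vadd (vadd u v) v) * E u" using p2 by (smt (verit) zero_le_power2 power2_eq_square)
  then show ?case using Epos[of u] by simp
qed

lemma big: assumes "sbn u v"
  shows "E u \<le> E (vadd u v)" "E v \<le> E (vadd u v)" "h * E u * E v \<le> 2 * E (vadd u v)"
    "(E u)\<^sup>2 + (E v)\<^sup>2 \<le> (E (vadd u v))\<^sup>2"
proof -
  have p: "E (vadd u v) * E (vsub u v) = (E u)\<^sup>2 + (E v)\<^sup>2" using ptol assms by blast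
  have a: "E (vsub u v) \<le> E (vadd u v)" using asc assms by blast
  have "E (vadd u v) * E (vsub u v) \<le> E (vadd u v) * E (vadd u v)"
    using a Epos[of "vadd u v"] by (simp add: mult_left_mono)
  then show s: "(E u)\<^sup>2 + (E v)\<^sup>2 \<le> (E (vadd u v))\<^sup>2" using p by (simp add: power2_eq_square)
  show "E u \<le> E (vadd u v)"
    using s Epos[of u] Epos[of "vadd u v"] by (smt (verit) power2_le_imp_le zero_le_power2)
  show "E v \<le> E (vadd u v)"
    using s Epos[of v] Epos[of "vadd u v"] by (smt (verit) power2_le_imp_le zero_le_power2)
  show "h * E u * E v \<le> 2 * E (vadd u v)" using lin[OF assms] a by simp
qed

lemma hpos: "h > 0"
  unfolding h_def using Epos[of "(1,0)"] Epos[of "(0,1)"] Epos[of "vsub (1,0) (0,1)"]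
  by (intro divide_pos_pos add_pos_pos mult_pos_pos) auto

lemma root_big: "h * E (1,0) > 2" "h * E (0,1) > 2"
proof -
  let ?a = "E (1,0)" and ?b = "E (0,1)" and ?r = "E (vsub (1,0) (0,1))"
  have pa: "?a > 0" and pb: "?b > 0" and pr: "?r > 0" using Epos by auto
  have a2: "?a\<^sup>2 > 0" "?b\<^sup>2 > 0" using pa pb by auto
  have sq: "2 * (?b * ?r) \<le> ?b\<^sup>2 + ?r\<^sup>2" using sum_squares_bound[of ?b ?r] by simp
  have "h * ?a = (?a\<^sup>2 + ?b\<^sup>2 + ?r\<^sup>2) / (?b * ?r)"
    unfolding h_def using pa pb pr by (simp add: field_simps power2_eq_square)
  moreover have "(?a\<^sup>2 + ?b\<^sup>2 + ?r\<^sup>2) / (?b * ?r) > 2"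
  proof -
    have "2*(?b*?r) < ?a\<^sup>2 + ?b\<^sup>2 + ?r\<^sup>2" using sq a2 by linarith
    then show ?thesis using pb pr by (simp add: field_simps)
  qed
  ultimately show "h * ?a > 2" by simp
  have sq2: "2 * (?a * ?r) \<le> ?a\<^sup>2 + ?r\<^sup>2" using sum_squares_bound[of ?a ?r] by simp
  have "h * ?b = (?a\<^sup>2 + ?b\<^sup>2 + ?r\<^sup>2) / (?a * ?r)"
    unfolding h_def using pa pb pr by (simp add: field_simps power2_eq_square)
  moreover have "(?a\<^sup>2 + ?b\<^sup>2 + ?r\<^sup>2) / (?a * ?r) > 2"
  proof -
    have "2*(?a*?r) < ?a\<^sup>2 + ?b\<^sup>2 + ?r\<^sup>2" using sq2 a2 by linarith
    then show ?thesis using pa pr by (simp add: field_simps)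
  qed
  ultimately show "h * ?b > 2" by simp
qed

definition Y :: "int\<times>int \<Rightarrow> real" where "Y x = h / 2 * E x"
definition \<rho> :: real where "\<rho> = min (Y (1,0)) (Y (0,1))"

lemma rho_gt1: "\<rho> > 1"
  using root_big unfolding \<rho>_def Y_def by auto

lemma Ypos: "Y x > 0" unfolding Y_def using hpos Epos[of x] by simp

lemma Ymul: assumes "sbn u v" shows "Y u * Y v \<le> Y (vadd u v)"
proof -
  have "h * E u * E v \<le> 2 * E (vadd u v)" using big(3)[OF assms] .
  then have "h / 2 * (h * E u * E v) \<le> h / 2 * (2 * E (vadd u v))"
    using hpos by (intro mult_left_mono) auto
  then show ?thesis unfolding Y_def by (simp add: algebra_simps)
qed

lemma growth: "sbn u v \<Longrightarrow> Y u \<ge> \<rho> powr (of_int (sz u)) \<and> Y v \<ge> \<rho> powr (of_int (sz v))"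
proof (induction rule: sbn.induct)
  case root
  then show ?case using rho_gt1 by (simp add: sz_def \<rho>_def)
next
  case (lft u v)
  have "\<rho> powr (of_int (sz (vadd u v))) = \<rho> powr (of_int (sz u)) * \<rho> powr (of_int (sz v))"
    by (simp add: powr_add)
  also have "\<dots> \<le> Y u * Y v" using lft.IH Ypos[of u] Ypos[of v] by (intro mult_mono) auto
  also have "\<dots> \<le> Y (vadd u v)" using Ymul[OF lft.hyps] .
  finally show ?case using lft.IH by simp
next
  case (rgt u v)
  have "\<rho> powr (of_int (sz (vadd u v))) = \<rho> powr (of_int (sz u)) * \<rho> powr (of_int (sz v))"
    by (simp add: powr_add)
  also have "\<dots> \<le> Y u * Y v" using rgt.IH Ypos[of u] Ypos[of v] by (intro mult_mono) auto
  also have "\<dots> \<le> Y (vadd u v)" using Ymul[OF rgt.hyps] .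
  finally show ?case using rgt.IH by simp
qed

lemma growth_s: assumes "sbn u v" shows "Y (vadd u v) \<ge> \<rho> powr (of_int (sz (vadd u v)))"
  using growth[OF sbn.lft[OF assms]] by simp

lemma sz_le_log: assumes "Y x \<ge> \<rho> powr (of_int (sz x))"
  shows "of_int (sz x) \<le> ln (Y x) / ln \<rho>"
proof -
  have "ln (\<rho> powr (of_int (sz x))) \<le> ln (Y x)" using assms rho_gt1 Ypos[of x] by (subst ln_le_cancel_iff) auto
  moreover have "ln (\<rho> powr (of_int (sz x))) = of_int (sz x) * ln \<rho>" using rho_gt1 by (simp add: ln_powr)
  ultimately have "of_int (sz x) * ln \<rho> \<le> ln (Y x)" by simp
  then show ?thesis using rho_gt1 by (simp add: field_simps)
qed

definition c1 :: real where "c1 = 2 / ln \<rho>"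

lemma c1pos: "c1 > 0" unfolding c1_def using rho_gt1 by simp

lemma omega_bound:
  assumes "Y x \<ge> \<rho> powr (of_int (sz x))" "0 \<le> p" "p \<le> 2 / (Y x)\<^sup>2"
  shows "p * of_int (sz x) \<le> c1 / Y x"
proof -
  have yp: "Y x > 0" by (rule Ypos)
  have s0: "of_int (sz x) \<le> ln (Y x) / ln \<rho>" using sz_le_log[OF assms(1)] .
  have lnY: "ln (Y x) \<le> Y x" using ln_le_minus_one[OF yp] by simp
  have lr: "ln \<rho> > 0" using rho_gt1 by simp
  have s1: "of_int (sz x) \<le> Y x / ln \<rho>" using s0 lnY lr by (meson divide_right_mono less_imp_le order_trans)
  have "p * of_int (sz x) \<le> p * (Y x / ln \<rho>)" using s1 assms(2) by (rule mult_left_mono)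
  also have "\<dots> \<le> 2 / (Y x)\<^sup>2 * (Y x / ln \<rho>)" using assms(3) yp lr by (intro mult_right_mono) auto
  also have "\<dots> = c1 / Y x" unfolding c1_def using yp by (simp add: field_simps power2_eq_square)
  finally show ?thesis .
qed

definition Emin :: real where "Emin = min (E (1,0)) (E (0,1))"

lemma Emin_pos: "Emin > 0" unfolding Emin_def using Epos by simp

lemma Emin_le: "sbn u v \<Longrightarrow> Emin \<le> E u \<and> Emin \<le> E v"
proof (induction rule: sbn.induct)
  case root then show ?case by (simp add: Emin_def)
next
  case (lft u v) then show ?case using big(2)[OF lft.hyps] by simp
next
  case (rgt u v) then show ?case using big(1)[OF rgt.hyps] by simp
qed

lemma Emin_le_s: "sbn u v \<Longrightarrow> Emin \<le> E (vadd u v)"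
  using Emin_le[of u v] big(1)[of u v] by fastforce

end

locale rl = rl0 E for E :: "int\<times>int \<Rightarrow> real" +
  fixes U :: "int\<times>int \<Rightarrow> real" and f :: "int\<times>int \<Rightarrow> int\<times>int \<Rightarrow> real"
    and C \<eta> :: real
  assumes Uneg: "\<And>x. U (vneg x) = U x"
    and rel: "\<And>u v. sbn u v \<Longrightarrow> U (vsub u v) + U (vadd u v) =
        2*(E u)\<^sup>2/((E u)\<^sup>2+(E v)\<^sup>2) * U u + 2*(E v)\<^sup>2/((E u)\<^sup>2+(E v)\<^sup>2) * U v + f u v"
    and fb: "\<And>u v. sbn u v \<Longrightarrow> \<bar>f u v\<bar> \<le> C * E (vadd u v) powr \<eta>"
    and C0: "C \<ge> 0" and eta0: "\<eta> \<ge> 0"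
begin

definition Aq :: "int\<times>int \<Rightarrow> int\<times>int \<Rightarrow> real" where "Aq u v = U (vadd u v) - U u"
definition Bq :: "int\<times>int \<Rightarrow> int\<times>int \<Rightarrow> real" where "Bq u v = U (vadd u v) - U v"

definition pL :: "int\<times>int \<Rightarrow> int\<times>int \<Rightarrow> real" where
  "pL u v = 2*(E u)\<^sup>2/((E u)\<^sup>2+(E (vadd u v))\<^sup>2)"
definition qL :: "int\<times>int \<Rightarrow> int\<times>int \<Rightarrow> real" where
  "qL u v = 2*(E (vadd u v))\<^sup>2/((E u)\<^sup>2+(E (vadd u v))\<^sup>2)"
definition pR :: "int\<times>int \<Rightarrow> int\<times>int \<Rightarrow> real" where
  "pR u v = 2*(E (vadd u v))\<^sup>2/((E (vadd u v))\<^sup>2+(E v)\<^sup>2)"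
definition qR :: "int\<times>int \<Rightarrow> int\<times>int \<Rightarrow> real" where
  "qR u v = 2*(E v)\<^sup>2/((E (vadd u v))\<^sup>2+(E v)\<^sup>2)"

lemma frac2: assumes "(A::real) + B > 0" shows "2*A/(A+B) + 2*B/(A+B) = 2"
proof -
  have "2*A/(A+B) + 2*B/(A+B) = (2*(A + B))/(A+B)" by (simp only: add_divide_distrib distrib_left)
  also have "\<dots> = 2" using assms by (metis less_irrefl nonzero_mult_div_cancel_right)
  finally show ?thesis .
qed

lemma pq_L: "pL u v + qL u v = 2"
proof -
  have "(E u)\<^sup>2+(E (vadd u v))\<^sup>2 > 0" using Epos[of u] by (simp add: add_pos_nonneg)
  then show ?thesis unfolding pL_def qL_def by (rule frac2)
qed

lemma pq_R: "pR u v + qR u v = 2"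
proof -
  have "(E (vadd u v))\<^sup>2+(E v)\<^sup>2 > 0" using Epos[of v] by (simp add: add_nonneg_pos)
  then show ?thesis unfolding pR_def qR_def by (rule frac2)
qed

lemma pq_nonneg: "pL u v \<ge> 0" "qL u v \<ge> 0" "pR u v \<ge> 0" "qR u v \<ge> 0"
  unfolding pL_def qL_def pR_def qR_def by auto

lemma alg_L: fixes x y p q a b g :: real assumes "x + y = p*a + q*b + g" "p + q = 2"
  shows "y - a = (b - x) + (q - 1)*(b - a) + g" "y - b = (b - x) - p*(b - a) + g"
proof -
  have p: "p = 2 - q" using assms(2) by simp
  show "y - a = (b - x) + (q - 1)*(b - a) + g" using assms(1) unfolding p by (simp add: algebra_simps)
  show "y - b = (b - x) - p*(b - a) + g" using assms(1) unfolding p by (simp add: algebra_simps)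
qed

lemma alg_R: fixes x y p q a b g :: real assumes "x + y = p*a + q*b + g" "p + q = 2"
  shows "y - a = (a - x) - q*(a - b) + g" "y - b = (a - x) + (p - 1)*(a - b) + g"
proof -
  have p: "p = 2 - q" using assms(2) by simp
  show "y - a = (a - x) - q*(a - b) + g" using assms(1) unfolding p by (simp add: algebra_simps)
  show "y - b = (a - x) + (p - 1)*(a - b) + g" using assms(1) unfolding p by (simp add: algebra_simps)
qed

lemma recL: assumes "sbn u v"
  shows "Aq u (vadd u v) = Bq u v + (qL u v - 1) * Aq u v + f u (vadd u v)"
    "Bq u (vadd u v) = Bq u v - pL u v * Aq u v + f u (vadd u v)"
proof -
  have r: "U v + U (vadd u (vadd u v)) = pL u v * U u + qL u v * U (vadd u v) + f u (vadd u v)"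
    using rel[OF sbn.lft[OF assms]] by (simp add: Uneg pL_def qL_def)
  show "Aq u (vadd u v) = Bq u v + (qL u v - 1) * Aq u v + f u (vadd u v)"
    using alg_L(1)[OF r pq_L] unfolding Aq_def Bq_def by simp
  show "Bq u (vadd u v) = Bq u v - pL u v * Aq u v + f u (vadd u v)"
    using alg_L(2)[OF r pq_L] unfolding Aq_def Bq_def by simp
qed

lemma recR: assumes "sbn u v"
  shows "Aq (vadd u v) v = Aq u v - qR u v * Bq u v + f (vadd u v) v"
    "Bq (vadd u v) v = Aq u v + (pR u v - 1) * Bq u v + f (vadd u v) v"
proof -
  have r: "U u + U (vadd (vadd u v) v) = pR u v * U (vadd u v) + qR u v * U v + f (vadd u v) v"
    using rel[OF sbn.rgt[OF assms]] by (simp add: pR_def qR_def)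
  show "Aq (vadd u v) v = Aq u v - qR u v * Bq u v + f (vadd u v) v"
    using alg_R(1)[OF r pq_R] unfolding Aq_def Bq_def by simp
  show "Bq (vadd u v) v = Aq u v + (pR u v - 1) * Bq u v + f (vadd u v) v"
    using alg_R(2)[OF r pq_R] unfolding Aq_def Bq_def by simp
qed

lemma qL_abs: "\<bar>qL u v - 1\<bar> \<le> 1"
  using pq_L[of u v] pq_nonneg[of u v] by auto
lemma pR_abs: "\<bar>pR u v - 1\<bar> \<le> 1"
  using pq_R[of u v] pq_nonneg[of u v] by auto

lemma Es_ge: assumes "sbn u v" shows "E u * Y v \<le> E (vadd u v)" "Y u * E v \<le> E (vadd u v)"
proof -
  have "h * E u * E v \<le> 2 * E (vadd u v)" using big(3)[OF assms] .
  then show "E u * Y v \<le> E (vadd u v)" "Y u * E v \<le> E (vadd u v)" unfolding Y_def by (simp_all add: algebra_simps)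
qed

lemma pL_small: assumes "sbn u v" shows "pL u v \<le> 2 / (Y v)\<^sup>2"
proof -
  have eu: "E u > 0" and yv: "Y v > 0" using Epos Ypos by auto
  have es: "E u * Y v \<le> E (vadd u v)" using Es_ge(1)[OF assms] .
  have "pL u v \<le> 2*(E u)\<^sup>2/((E (vadd u v))\<^sup>2)"
    unfolding pL_def using eu Epos[of "vadd u v"] by (intro divide_left_mono mult_pos_pos add_pos_pos) auto
  also have "\<dots> \<le> 2*(E u)\<^sup>2/((E u * Y v)\<^sup>2)"
  proof -
    have pos: "0 < (E (vadd u v))\<^sup>2 * (E u * Y v)\<^sup>2" using eu yv Epos[of "vadd u v"] by simp
    show ?thesis using es eu yv pos by (intro divide_left_mono power_mono) auto
  qed
  also have "\<dots> = 2 / (Y v)\<^sup>2" using eu by (simp add: power_mult_distrib)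
  finally show ?thesis .
qed

lemma qR_small: assumes "sbn u v" shows "qR u v \<le> 2 / (Y u)\<^sup>2"
proof -
  have ev: "E v > 0" and yu: "Y u > 0" using Epos Ypos by auto
  have es: "Y u * E v \<le> E (vadd u v)" using Es_ge(2)[OF assms] .
  have "qR u v \<le> 2*(E v)\<^sup>2/((E (vadd u v))\<^sup>2)"
    unfolding qR_def using ev Epos[of "vadd u v"] by (intro divide_left_mono mult_pos_pos add_pos_pos) auto
  also have "\<dots> \<le> 2*(E v)\<^sup>2/((Y u * E v)\<^sup>2)"
  proof -
    have pos: "0 < (E (vadd u v))\<^sup>2 * (Y u * E v)\<^sup>2" using ev yu Epos[of "vadd u v"] by simp
    show ?thesis using es ev yu pos by (intro divide_left_mono power_mono) auto
  qed
  also have "\<dots> = 2 / (Y u)\<^sup>2" using ev by (simp add: power_mult_distrib)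
  finally show ?thesis .
qed

lemma omegaL: assumes "sbn u v" shows "pL u v * of_int (sz v) \<le> c1 / Y v"
  using omega_bound[OF conjunct2[OF growth[OF assms]] pq_nonneg(1) pL_small[OF assms]] .

lemma omegaR: assumes "sbn u v" shows "qR u v * of_int (sz u) \<le> c1 / Y u"
  using omega_bound[OF conjunct1[OF growth[OF assms]] pq_nonneg(4) qR_small[OF assms]] .

definition K0 :: real where "K0 = max \<bar>Aq (1,0) (0,1)\<bar> \<bar>Bq (1,0) (0,1)\<bar>"
definition Gf :: "real \<Rightarrow> real" where "Gf n = - (\<rho> powr (1 - n)) / (\<rho> - 1)"
definition \<Gamma>0 :: real where "\<Gamma>0 = c1 * (1/(\<rho>-1) + 2)"
definition Gam :: "int\<times>int \<Rightarrow> int\<times>int \<Rightarrow> real" where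
  "Gam u v = c1 * (Gf (of_int (sz (vadd u v))) - 1/Y u - 1/Y v) + \<Gamma>0"
definition Pf :: "int\<times>int \<Rightarrow> int\<times>int \<Rightarrow> real" where
  "Pf u v = K0 + C * of_int (sz (vadd u v)) * E (vadd u v) powr \<eta>"
definition Kb :: "int\<times>int \<Rightarrow> int\<times>int \<Rightarrow> real" where
  "Kb u v = Pf u v * exp (Gam u v)"

lemma K0_nonneg: "K0 \<ge> 0" unfolding K0_def by simp

lemma Gf_le0: "Gf n \<le> 0"
  unfolding Gf_def using rho_gt1 by (simp add: divide_nonpos_pos)

lemma Gf_ge: assumes "n \<ge> 1" shows "Gf n \<ge> - 1/(\<rho>-1)"
proof -
  have "\<rho> powr (1 - n) \<le> \<rho> powr 0" using assms rho_gt1 by (intro powr_mono) auto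
  then have "\<rho> powr (1 - n) \<le> 1" using rho_gt1 by simp
  then show ?thesis unfolding Gf_def using rho_gt1 by (simp add: divide_right_mono)
qed

lemma divdiff: "(d::real) \<noteq> 0 \<Longrightarrow> -a/d - (-b/d) = (b - a)/d" by (simp add: field_simps)

lemma Gf_step: assumes "m \<ge> n + 1" shows "Gf m - Gf n \<ge> \<rho> powr (- n)"
proof -
  have r1: "\<rho> - 1 > 0" using rho_gt1 by simp
  have a: "\<rho> powr (1 - m) \<le> \<rho> powr (- n)" using assms rho_gt1 by (intro powr_mono) auto
  have b: "\<rho> powr (1 - n) = \<rho> * \<rho> powr (- n)"
    using rho_gt1 powr_add[of \<rho> 1 "-n"] by simp
  have "Gf m - Gf n = (\<rho> powr (1 - n) - \<rho> powr (1 - m)) / (\<rho> - 1)"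
    unfolding Gf_def using r1 divdiff[of "\<rho> - 1" "\<rho> powr (1 - m)" "\<rho> powr (1 - n)"] by simp
  also have "\<dots> \<ge> (\<rho> powr (1 - n) - \<rho> powr (- n)) / (\<rho> - 1)"
    using a r1 by (intro divide_right_mono) auto
  also have "(\<rho> powr (1 - n) - \<rho> powr (- n)) / (\<rho> - 1) = \<rho> powr (- n)"
    unfolding b using r1 by (simp add: field_simps)
  finally show ?thesis by simp
qed

lemma invY: assumes "Y x \<ge> \<rho> powr (of_int (sz x))" "sz x \<ge> 1"
  shows "1 / Y x \<le> \<rho> powr (- of_int (sz x))" "1 / Y x \<le> 1"
proof -
  have p: "\<rho> powr (of_int (sz x)) > 0" using rho_gt1 by simp
  have "1 / Y x \<le> 1 / \<rho> powr (of_int (sz x))" using assms(1) p Ypos[of x] by (intro divide_left_mono) auto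
  then show "1 / Y x \<le> \<rho> powr (- of_int (sz x))" by (simp add: powr_minus_divide)
  have "\<rho> powr (of_int (sz x)) \<ge> \<rho> powr 1" using assms(2) rho_gt1 by (intro powr_mono) auto
  then have "\<rho> powr (of_int (sz x)) \<ge> 1" using rho_gt1 by simp
  then show "1 / Y x \<le> 1" using assms(1) by simp
qed

lemma Gam_bounds: assumes "sbn u v" shows "0 \<le> Gam u v" "Gam u v \<le> \<Gamma>0"
proof -
  have iu: "1 / Y u \<le> 1" using invY(2)[OF conjunct1[OF growth[OF assms]]] sbn_sz[OF assms] by simp
  have iv: "1 / Y v \<le> 1" using invY(2)[OF conjunct2[OF growth[OF assms]]] sbn_sz[OF assms] by simp
  have gf: "Gf (of_int (sz (vadd u v))) \<ge> - 1/(\<rho>-1)" using sbn_sz[OF assms] by (intro Gf_ge) simp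
  show "0 \<le> Gam u v" unfolding Gam_def \<Gamma>0_def
  proof -
    have "Gf (of_int (sz (vadd u v))) - 1/Y u - 1/Y v \<ge> -(1/(\<rho>-1) + 2)" using iu iv gf by simp
    then have "c1 * (Gf (of_int (sz (vadd u v))) - 1/Y u - 1/Y v) \<ge> c1 * (-(1/(\<rho>-1) + 2))"
      using c1pos by (intro mult_left_mono) auto
    moreover have "c1 * (-(1/(\<rho>-1) + 2)) = - (c1 * (1/(\<rho>-1)+2))" by (simp add: algebra_simps)
    ultimately show "0 \<le> c1 * (Gf (real_of_int (sz (vadd u v))) - 1 / Y u - 1 / Y v) + c1 * (1 / (\<rho> - 1) + 2)"
      by linarith
  qed
  have yu: "1 / Y u \<ge> 0" "1 / Y v \<ge> 0" using Ypos[of u] Ypos[of v] by auto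
  have "Gf (of_int (sz (vadd u v))) - 1/Y u - 1/Y v \<le> 0" using Gf_le0 yu by (smt (verit))
  then have "c1 * (Gf (of_int (sz (vadd u v))) - 1/Y u - 1/Y v) \<le> 0" using c1pos
    by (simp add: mult_nonneg_nonpos)
  then show "Gam u v \<le> \<Gamma>0" unfolding Gam_def by simp
qed

lemma Gam_L: assumes "sbn u v" shows "Gam u (vadd u v) \<ge> Gam u v + c1 / Y v"
proof -
  let ?w = "vadd u v"
  have szu: "sz u \<ge> 1" using sbn_sz[OF assms] by simp
  have gs: "Gf (of_int (sz (vadd u ?w))) - Gf (of_int (sz ?w)) \<ge> \<rho> powr (- of_int (sz ?w))"
    using szu by (intro Gf_step) simp
  have iw: "1 / Y ?w \<le> \<rho> powr (- of_int (sz ?w))"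
    using invY(1)[OF growth_s[OF assms]] sbn_sz[OF assms] by simp
  have "Gam u ?w - Gam u v = c1 * ((Gf (of_int (sz (vadd u ?w))) - Gf (of_int (sz ?w))) - 1 / Y ?w + 1 / Y v)"
    unfolding Gam_def by (simp add: algebra_simps)
  also have "\<dots> \<ge> c1 * (1 / Y v)" using gs iw c1pos by (intro mult_left_mono) auto
  finally show ?thesis by simp
qed

lemma Gam_R: assumes "sbn u v" shows "Gam (vadd u v) v \<ge> Gam u v + c1 / Y u"
proof -
  let ?w = "vadd u v"
  have szv: "sz v \<ge> 1" using sbn_sz[OF assms] by simp
  have gs: "Gf (of_int (sz (vadd ?w v))) - Gf (of_int (sz ?w)) \<ge> \<rho> powr (- of_int (sz ?w))"
    using szv by (intro Gf_step) simp
  have iw: "1 / Y ?w \<le> \<rho> powr (- of_int (sz ?w))"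
    using invY(1)[OF growth_s[OF assms]] sbn_sz[OF assms] by simp
  have "Gam ?w v - Gam u v = c1 * ((Gf (of_int (sz (vadd ?w v))) - Gf (of_int (sz ?w))) - 1 / Y ?w + 1 / Y u)"
    unfolding Gam_def by (simp add: algebra_simps)
  also have "\<dots> \<ge> c1 * (1 / Y u)" using gs iw c1pos by (intro mult_left_mono) auto
  finally show ?thesis by simp
qed

lemma Pf_nonneg: assumes "sbn u v" shows "Pf u v \<ge> 0"
  unfolding Pf_def using K0_nonneg C0 sbn_sz[OF assms] by (intro add_nonneg_nonneg mult_nonneg_nonneg) auto

lemma Pf_step_gen: assumes "sz s' \<ge> sz s + 1" "sz s \<ge> 0" "E s \<le> E s'"
  shows "K0 + C * of_int (sz s') * E s' powr \<eta> \<ge> (K0 + C * of_int (sz s) * E s powr \<eta>) + C * E s' powr \<eta>"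
proof -
  have e: "E s powr \<eta> \<le> E s' powr \<eta>" using assms(3) eta0 Epos[of s] by (intro powr_mono2) auto
  have "C * of_int (sz s) * E s powr \<eta> \<le> C * of_int (sz s) * E s' powr \<eta>"
    using e C0 assms(2) by (intro mult_left_mono) auto
  also have "\<dots> + C * E s' powr \<eta> = C * (of_int (sz s) + 1) * E s' powr \<eta>" by (simp add: algebra_simps)
  also have "\<dots> \<le> C * of_int (sz s') * E s' powr \<eta>"
    using assms(1) C0 by (intro mult_right_mono mult_left_mono) auto
  finally show ?thesis by simp
qed

lemma Pf_L: assumes "sbn u v" shows "Pf u (vadd u v) \<ge> Pf u v + C * E (vadd u (vadd u v)) powr \<eta>"
  unfolding Pf_def using sbn_sz[OF assms] big(2)[OF sbn.lft[OF assms]]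
  by (intro Pf_step_gen) auto

lemma Pf_R: assumes "sbn u v" shows "Pf (vadd u v) v \<ge> Pf u v + C * E (vadd (vadd u v) v) powr \<eta>"
  unfolding Pf_def using sbn_sz[OF assms] big(1)[OF sbn.rgt[OF assms]]
  by (intro Pf_step_gen) auto

lemma exp_step: fixes g g' w :: real assumes "g' \<ge> g + w" "w \<ge> 0" shows "exp g' \<ge> exp g * (1 + w)"
proof -
  have "exp g * (1 + w) \<le> exp g * exp w" using assms(2) by (intro mult_left_mono) (auto simp: exp_ge_add_one_self)
  also have "\<dots> = exp (g + w)" by (simp add: exp_add)
  also have "\<dots> \<le> exp g'" using assms(1) by simp
  finally show ?thesis .
qed

lemma Kb_gen: fixes P P' c g g' w :: real assumes "P' \<ge> P + c" "P \<ge> 0" "c \<ge> 0" "g' \<ge> g + w" "w \<ge> 0" "g' \<ge> 0"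
  shows "P' * exp g' \<ge> P * exp g * (1 + w) + c"
proof -
  have "P * exp g * (1 + w) \<le> P * exp g'" using exp_step[OF assms(4,5)] assms(2) by (simp add: mult_left_mono mult.assoc)
  moreover have "c \<le> c * exp g'" using assms(3,6) by (simp add: mult_le_cancel_left1)
  ultimately have "P * exp g * (1 + w) + c \<le> (P + c) * exp g'" by (simp add: algebra_simps)
  also have "\<dots> \<le> P' * exp g'" using assms(1) by (intro mult_right_mono) auto
  finally show ?thesis .
qed

lemma Kb_L: assumes "sbn u v"
  shows "Kb u (vadd u v) \<ge> Kb u v * (1 + pL u v * of_int (sz v)) + C * E (vadd u (vadd u v)) powr \<eta>"
proof -
  have w0: "pL u v * of_int (sz v) \<ge> 0" using pq_nonneg sbn_sz[OF assms] by simp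
  have g: "Gam u (vadd u v) \<ge> Gam u v + pL u v * of_int (sz v)"
    using Gam_L[OF assms] omegaL[OF assms] by simp
  show ?thesis unfolding Kb_def
    using Kb_gen[OF Pf_L[OF assms] Pf_nonneg[OF assms] _ g w0 Gam_bounds(1)[OF sbn.lft[OF assms]]] C0 by simp
qed

lemma Kb_R: assumes "sbn u v"
  shows "Kb (vadd u v) v \<ge> Kb u v * (1 + qR u v * of_int (sz u)) + C * E (vadd (vadd u v) v) powr \<eta>"
proof -
  have w0: "qR u v * of_int (sz u) \<ge> 0" using pq_nonneg sbn_sz[OF assms] by simp
  have g: "Gam (vadd u v) v \<ge> Gam u v + qR u v * of_int (sz u)"
    using Gam_R[OF assms] omegaR[OF assms] by simp
  show ?thesis unfolding Kb_def
    using Kb_gen[OF Pf_R[OF assms] Pf_nonneg[OF assms] _ g w0 Gam_bounds(1)[OF sbn.rgt[OF assms]]] C0 by simp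
qed

lemma Kb_nonneg: "sbn u v \<Longrightarrow> Kb u v \<ge> 0"
  unfolding Kb_def using Pf_nonneg by simp

lemma stepA: fixes A' a b F K K' c \<omega> x y :: real
  assumes "\<bar>A'\<bar> \<le> b + a + F" "a \<le> K*x" "b \<le> K*y" "F \<le> c" "K' \<ge> K*(1+\<omega>) + c"
    "\<omega> \<ge> 0" "K \<ge> 0" "c \<ge> 0" "x \<ge> 1" "y \<ge> 1"
  shows "\<bar>A'\<bar> \<le> K'*(x+y)"
proof -
  have "K*\<omega> \<ge> 0" using assms(6,7) by simp
  then have k: "K' \<ge> K + c" using assms(5) by (simp add: algebra_simps)
  have "K'*(x+y) \<ge> (K + c)*(x+y)" using k assms(9,10) by (intro mult_right_mono) auto
  moreover have "(K + c)*(x+y) \<ge> K*x + K*y + c"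
  proof -
    have "c*(x+y) \<ge> c" using assms(8,9,10) by (simp add: mult_le_cancel_left1)
    then show ?thesis by (simp add: algebra_simps)
  qed
  ultimately show ?thesis using assms(1-4) by linarith
qed

lemma stepB: fixes B' a b F K K' c p x y :: real
  assumes "\<bar>B'\<bar> \<le> b + p*a + F" "a \<le> K*x" "b \<le> K*y" "F \<le> c" "K' \<ge> K*(1+p*x) + c"
    "p \<ge> 0" "K \<ge> 0" "c \<ge> 0" "x \<ge> 0" "y \<ge> 1"
  shows "\<bar>B'\<bar> \<le> K'*y"
proof -
  have nn: "0 \<le> p*(K*x)" using assms(6,7,9) by simp
  have "p*a \<le> p*(K*x)" using assms(2,6) by (rule mult_left_mono)
  also have "\<dots> \<le> p*(K*x)*y" using mult_left_mono[OF assms(10) nn] by simp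
  finally have pa: "p*a \<le> K*p*x*y" by (simp add: ac_simps)
  have cy: "c \<le> c*y" using assms(8,10) by (simp add: mult_le_cancel_left1)
  have "\<bar>B'\<bar> \<le> K*y + K*p*x*y + c*y" using assms(1,3,4) pa cy by linarith
  also have "\<dots> = (K*(1+p*x) + c)*y" by (simp add: algebra_simps)
  also have "\<dots> \<le> K'*y" using assms(5,10) by (intro mult_right_mono) auto
  finally show ?thesis .
qed

lemma tri3m: fixes x y z :: real shows "\<bar>x - y + z\<bar> \<le> \<bar>x\<bar> + \<bar>y\<bar> + \<bar>z\<bar>" by linarith
lemma tri3p: fixes x y z :: real shows "\<bar>x + y + z\<bar> \<le> \<bar>x\<bar> + \<bar>y\<bar> + \<bar>z\<bar>" by linarith

lemma abs_q: fixes q a :: real assumes "\<bar>q - 1\<bar> \<le> 1" shows "\<bar>(q - 1)*a\<bar> \<le> \<bar>a\<bar>"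
  using assms by (simp add: abs_mult mult_left_le_one_le)

lemma Kb_root: "K0 \<le> Kb (1,0) (0,1)"
proof -
  have g: "Gam (1,0) (0,1) \<ge> 0" using Gam_bounds(1)[OF sbn.root] .
  have p: "Pf (1,0) (0,1) \<ge> K0" unfolding Pf_def using C0 by (simp add: sz_def vadd_def)
  have "K0 \<le> Pf (1,0) (0,1)" using p .
  also have "\<dots> \<le> Pf (1,0) (0,1) * exp (Gam (1,0) (0,1))"
    using g Pf_nonneg[OF sbn.root] by (simp add: mult_le_cancel_left1)
  finally show ?thesis unfolding Kb_def .
qed

lemma KB: "sbn u v \<Longrightarrow> \<bar>Aq u v\<bar> \<le> Kb u v * of_int (sz v) \<and> \<bar>Bq u v\<bar> \<le> Kb u v * of_int (sz u)"
proof (induction rule: sbn.induct)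
  case root
  then show ?case using Kb_root unfolding K0_def by (simp add: sz_def)
next
  case (lft u v)
  let ?w = "vadd u v"
  have szs: "sz u \<ge> 1" "sz v \<ge> 1" using sbn_sz[OF lft.hyps] by auto
  have fb': "\<bar>f u ?w\<bar> \<le> C * E (vadd u ?w) powr \<eta>" using fb[OF sbn.lft[OF lft.hyps]] .
  have c0: "C * E (vadd u ?w) powr \<eta> \<ge> 0" using C0 by simp
  have K: "Kb u ?w \<ge> Kb u v * (1 + pL u v * of_int (sz v)) + C * E (vadd u ?w) powr \<eta>"
    using Kb_L[OF lft.hyps] .
  have Kn: "Kb u v \<ge> 0" using Kb_nonneg[OF lft.hyps] .
  have a1: "\<bar>Aq u ?w\<bar> \<le> \<bar>Bq u v\<bar> + \<bar>Aq u v\<bar> + \<bar>f u ?w\<bar>"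
    unfolding recL(1)[OF lft.hyps] using abs_q[OF qL_abs, of u v "Aq u v"] tri3p[of "Bq u v" "(qL u v - 1) * Aq u v" "f u ?w"] by linarith
  have A: "\<bar>Aq u ?w\<bar> \<le> Kb u ?w * (of_int (sz v) + of_int (sz u))"
    using stepA[OF a1 _ _ fb' K _ Kn c0] lft.IH szs pq_nonneg(1)[of u v] by auto
  have b1: "\<bar>Bq u ?w\<bar> \<le> \<bar>Bq u v\<bar> + pL u v * \<bar>Aq u v\<bar> + \<bar>f u ?w\<bar>"
  proof -
    have "\<bar>pL u v * Aq u v\<bar> = pL u v * \<bar>Aq u v\<bar>" using pq_nonneg(1)[of u v] by (simp add: abs_mult)
    then show ?thesis unfolding recL(2)[OF lft.hyps] using tri3m[of "Bq u v" "pL u v * Aq u v" "f u ?w"] by simp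
  qed
  have B: "\<bar>Bq u ?w\<bar> \<le> Kb u ?w * of_int (sz u)"
    using stepB[OF b1 _ _ fb' K pq_nonneg(1) Kn c0] lft.IH szs by auto
  show ?case using A B by (simp add: add.commute)
next
  case (rgt u v)
  let ?w = "vadd u v"
  have szs: "sz u \<ge> 1" "sz v \<ge> 1" using sbn_sz[OF rgt.hyps] by auto
  have fb': "\<bar>f ?w v\<bar> \<le> C * E (vadd ?w v) powr \<eta>" using fb[OF sbn.rgt[OF rgt.hyps]] .
  have c0: "C * E (vadd ?w v) powr \<eta> \<ge> 0" using C0 by simp
  have K: "Kb ?w v \<ge> Kb u v * (1 + qR u v * of_int (sz u)) + C * E (vadd ?w v) powr \<eta>"
    using Kb_R[OF rgt.hyps] .
  have Kn: "Kb u v \<ge> 0" using Kb_nonneg[OF rgt.hyps] .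
  have a1: "\<bar>Aq ?w v\<bar> \<le> \<bar>Aq u v\<bar> + qR u v * \<bar>Bq u v\<bar> + \<bar>f ?w v\<bar>"
  proof -
    have "\<bar>qR u v * Bq u v\<bar> = qR u v * \<bar>Bq u v\<bar>" using pq_nonneg(4)[of u v] by (simp add: abs_mult)
    then show ?thesis unfolding recR(1)[OF rgt.hyps] using tri3m[of "Aq u v" "qR u v * Bq u v" "f ?w v"] by simp
  qed
  have A: "\<bar>Aq ?w v\<bar> \<le> Kb ?w v * of_int (sz v)"
    using stepB[OF a1 _ _ fb' K pq_nonneg(4) Kn c0] rgt.IH szs by auto
  have b1: "\<bar>Bq ?w v\<bar> \<le> \<bar>Aq u v\<bar> + \<bar>Bq u v\<bar> + \<bar>f ?w v\<bar>"
    unfolding recR(2)[OF rgt.hyps] using abs_q[OF pR_abs, of u v "Bq u v"] tri3p[of "Aq u v" "(pR u v - 1) * Bq u v" "f ?w v"] by linarith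
  have B: "\<bar>Bq ?w v\<bar> \<le> Kb ?w v * (of_int (sz u) + of_int (sz v))"
    using stepA[OF b1 _ _ fb' K _ Kn c0] rgt.IH szs pq_nonneg(4)[of u v] by auto
  show ?case using A B by (simp add: add.commute)
qed

definition U0 :: real where "U0 = max \<bar>U (1,0)\<bar> \<bar>U (0,1)\<bar>"
lemma Kb_mono_L: "sbn u v \<Longrightarrow> Kb u v \<le> Kb u (vadd u v)"
proof -
  assume a: "sbn u v"
  have "Kb u v \<le> Kb u v * (1 + pL u v * of_int (sz v))"
    using Kb_nonneg[OF a] pq_nonneg(1)[of u v] sbn_sz[OF a] by (simp add: mult_le_cancel_left1)
  also have "\<dots> \<le> Kb u (vadd u v)" using Kb_L[OF a] C0 by (smt (verit) powr_ge_zero mult_nonneg_nonneg)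
  finally show ?thesis .
qed

lemma Kb_mono_R: "sbn u v \<Longrightarrow> Kb u v \<le> Kb (vadd u v) v"
proof -
  assume a: "sbn u v"
  have "Kb u v \<le> Kb u v * (1 + qR u v * of_int (sz u))"
    using Kb_nonneg[OF a] pq_nonneg(4)[of u v] sbn_sz[OF a] by (simp add: mult_le_cancel_left1)
  also have "\<dots> \<le> Kb (vadd u v) v" using Kb_R[OF a] C0 by (smt (verit) powr_ge_zero mult_nonneg_nonneg)
  finally show ?thesis .
qed

lemma ub_step: fixes K K' s s' z W :: real
  assumes "K \<ge> 0" "K' \<ge> K" "s' \<ge> s + 1" "s \<ge> 0" "z \<le> s" "W \<le> U0 + K*s\<^sup>2 + K*z"
  shows "W \<le> U0 + K'*s'\<^sup>2"
proof -
  have "K*z \<le> K*s" using mult_left_mono[OF assms(5) assms(1)] .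
  then have "W \<le> U0 + K*(s\<^sup>2 + s)" using assms(6) by (simp add: algebra_simps)
  also have "K*(s\<^sup>2 + s) \<le> K*s'\<^sup>2"
  proof -
    have "s\<^sup>2 + s \<le> (s+1)\<^sup>2" using assms(4) by (simp add: power2_eq_square algebra_simps)
    also have "\<dots> \<le> s'\<^sup>2" using assms(3,4) by (intro power_mono) auto
    finally show ?thesis using assms(1) by (rule mult_left_mono)
  qed
  also have "K*s'\<^sup>2 \<le> K'*s'\<^sup>2" using assms(2) by (intro mult_right_mono) auto
  finally show ?thesis by simp
qed

lemma ub_step0: fixes K K' s s' W :: real
  assumes "K \<ge> 0" "K' \<ge> K" "s' \<ge> s + 1" "s \<ge> 0" "W \<le> U0 + K*s\<^sup>2"
  shows "W \<le> U0 + K'*s'\<^sup>2"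
  using ub_step[OF assms(1-4), of 0 W] assms(4,5) by simp

lemma UB: "sbn u v \<Longrightarrow> \<bar>U u\<bar> \<le> U0 + Kb u v * (of_int (sz (vadd u v)))\<^sup>2 \<and>
                         \<bar>U v\<bar> \<le> U0 + Kb u v * (of_int (sz (vadd u v)))\<^sup>2"
proof (induction rule: sbn.induct)
  case root
  have "Kb (1,0) (0,1) \<ge> 0" using Kb_nonneg[OF sbn.root] .
  then show ?case unfolding U0_def by (simp add: add_increasing2)
next
  case (lft u v)
  let ?w = "vadd u v"
  have szs: "sz u \<ge> 1" "sz v \<ge> 1" using sbn_sz[OF lft.hyps] by auto
  have K0': "Kb u v \<ge> 0" using Kb_nonneg[OF lft.hyps] .
  have Km: "Kb u ?w \<ge> Kb u v" using Kb_mono_L[OF lft.hyps] .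
  have ss: "of_int (sz (vadd u ?w)) \<ge> of_int (sz ?w) + (1::real)" using szs by simp
  have s0: "of_int (sz ?w) \<ge> (0::real)" using szs by simp
  have uu: "\<bar>U u\<bar> \<le> U0 + Kb u ?w * (of_int (sz (vadd u ?w)))\<^sup>2"
    using ub_step0[OF K0' Km ss s0] lft.IH by blast
  have uw: "\<bar>U ?w\<bar> \<le> \<bar>U u\<bar> + \<bar>Aq u v\<bar>" unfolding Aq_def by linarith
  have "\<bar>U ?w\<bar> \<le> U0 + Kb u v * (of_int (sz ?w))\<^sup>2 + Kb u v * of_int (sz v)"
    using uw lft.IH KB[OF lft.hyps] by linarith
  moreover have zz: "of_int (sz v) \<le> (of_int (sz ?w)::real)" using szs by simp
  ultimately have "\<bar>U ?w\<bar> \<le> U0 + Kb u ?w * (of_int (sz (vadd u ?w)))\<^sup>2"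
    using ub_step[OF K0' Km ss s0] by blast
  then show ?case using uu by simp
next
  case (rgt u v)
  let ?w = "vadd u v"
  have szs: "sz u \<ge> 1" "sz v \<ge> 1" using sbn_sz[OF rgt.hyps] by auto
  have K0': "Kb u v \<ge> 0" using Kb_nonneg[OF rgt.hyps] .
  have Km: "Kb ?w v \<ge> Kb u v" using Kb_mono_R[OF rgt.hyps] .
  have ss: "of_int (sz (vadd ?w v)) \<ge> of_int (sz ?w) + (1::real)" using szs by simp
  have s0: "of_int (sz ?w) \<ge> (0::real)" using szs by simp
  have uv: "\<bar>U v\<bar> \<le> U0 + Kb ?w v * (of_int (sz (vadd ?w v)))\<^sup>2"
    using ub_step0[OF K0' Km ss s0] rgt.IH by blast
  have uw: "\<bar>U ?w\<bar> \<le> \<bar>U v\<bar> + \<bar>Bq u v\<bar>" unfolding Bq_def by linarith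
  have "\<bar>U ?w\<bar> \<le> U0 + Kb u v * (of_int (sz ?w))\<^sup>2 + Kb u v * of_int (sz u)"
    using uw rgt.IH KB[OF rgt.hyps] by linarith
  moreover have zz: "of_int (sz u) \<le> (of_int (sz ?w)::real)" using szs by simp
  ultimately have "\<bar>U ?w\<bar> \<le> U0 + Kb ?w v * (of_int (sz (vadd ?w v)))\<^sup>2"
    using ub_step[OF K0' Km ss s0] by blast
  then show ?case using uv by simp
qed

lemma U_s_bound: assumes "sbn u v"
  shows "\<bar>U (vadd u v)\<bar> \<le> U0 + 2 * Kb u v * (of_int (sz (vadd u v)))\<^sup>2"
proof -
  let ?s = "of_int (sz (vadd u v)) :: real"
  have szs: "sz u \<ge> 1" "sz v \<ge> 1" using sbn_sz[OF assms] by auto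
  have K0': "Kb u v \<ge> 0" using Kb_nonneg[OF assms] .
  have "\<bar>U (vadd u v)\<bar> \<le> \<bar>U u\<bar> + \<bar>Aq u v\<bar>" unfolding Aq_def by linarith
  also have "\<dots> \<le> U0 + Kb u v * ?s\<^sup>2 + Kb u v * of_int (sz v)" using UB[OF assms] KB[OF assms] by linarith
  also have "Kb u v * of_int (sz v) \<le> Kb u v * ?s\<^sup>2"
  proof -
    have "of_int (sz v) \<le> ?s" using szs by simp
    also have "\<dots> \<le> ?s\<^sup>2" using szs by (simp add: power2_eq_square)
    finally show ?thesis using K0' by (rule mult_left_mono)
  qed
  finally show ?thesis by simp
qed

lemma Kb_le: assumes "sbn u v"
  shows "Kb u v \<le> (K0 + C * of_int (sz (vadd u v)) * E (vadd u v) powr \<eta>) * exp \<Gamma>0"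
proof -
  have "Kb u v \<le> Pf u v * exp \<Gamma>0" unfolding Kb_def using Pf_nonneg[OF assms] Gam_bounds(2)[OF assms]
    by (intro mult_left_mono) auto
  then show ?thesis unfolding Pf_def .
qed

lemma U0_nonneg: "U0 \<ge> 0" unfolding U0_def by simp

theorem RL_main: assumes eps: "\<epsilon> > 0"
  shows "\<exists>M. \<forall>u v. sbn u v \<longrightarrow> \<bar>U (vadd u v)\<bar> \<le> M * E (vadd u v) powr (\<eta> + \<epsilon>)"
proof -
  define D1 where "D1 = 3 / (\<epsilon> * ln \<rho>)"
  define \<kappa> where "\<kappa> = h / 2"
  define M where "M = U0 / Emin powr (\<eta>+\<epsilon>) + 2 * exp \<Gamma>0 * D1^3 * \<kappa> powr \<epsilon> * (K0 / Emin powr \<eta> + C)"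
  have lr: "ln \<rho> > 0" using rho_gt1 by simp
  have D1p: "D1 > 0" unfolding D1_def using eps lr by simp
  have kp: "\<kappa> > 0" unfolding \<kappa>_def using hpos by simp
  have main: "\<bar>U (vadd u v)\<bar> \<le> M * E (vadd u v) powr (\<eta> + \<epsilon>)" if n: "sbn u v" for u v
  proof -
    define s where "s = vadd u v"
    define \<sigma> where "\<sigma> = (of_int (sz s) :: real)"
    define e where "e = E s"
    have \<sigma>1: "\<sigma> \<ge> 1" unfolding \<sigma>_def s_def using sbn_sz[OF n] by simp
    have ep: "e > 0" unfolding e_def using Epos by simp
    have emin: "Emin \<le> e" unfolding e_def s_def using Emin_le_s[OF n] .
    have gs: "Y s \<ge> \<rho> powr (of_int (sz s))" unfolding s_def using growth_s[OF n] .
    have Y1: "Y s \<ge> 1"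
    proof -
      have "\<rho> powr (of_int (sz s)) \<ge> \<rho> powr 0" using rho_gt1 \<sigma>1 unfolding \<sigma>_def by (intro powr_mono) auto
      then show ?thesis using gs rho_gt1 by simp
    qed
    have sig: "\<sigma> \<le> D1 * (Y s) powr (\<epsilon>/3)"
    proof -
      have a: "\<sigma> \<le> ln (Y s) / ln \<rho>" unfolding \<sigma>_def using sz_le_log[OF gs] .
      have b: "ln (Y s) \<le> (Y s) powr (\<epsilon>/3) / (\<epsilon>/3)" using ln_powr_bound[OF Y1, of "\<epsilon>/3"] eps by simp
      have "\<sigma> \<le> ((Y s) powr (\<epsilon>/3) / (\<epsilon>/3)) / ln \<rho>" using a b lr by (meson divide_right_mono less_imp_le order_trans)
      also have "\<dots> = D1 * (Y s) powr (\<epsilon>/3)" unfolding D1_def using eps lr by (simp add: field_simps)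
      finally show ?thesis .
    qed
    have sig3: "\<sigma>^3 \<le> D1^3 * (Y s) powr \<epsilon>"
    proof -
      have "\<sigma>^3 \<le> (D1 * (Y s) powr (\<epsilon>/3))^3" using sig \<sigma>1 by (intro power_mono) auto
      also have "\<dots> = D1^3 * ((Y s) powr (\<epsilon>/3))^3" by (simp add: power_mult_distrib)
      also have "((Y s) powr (\<epsilon>/3))^3 = (Y s) powr \<epsilon>" using powr_power[of "Y s" "\<epsilon>/3" 3] Ypos[of s] by simp
      finally show ?thesis .
    qed
    have Ye: "(Y s) powr \<epsilon> = \<kappa> powr \<epsilon> * e powr \<epsilon>" unfolding Y_def \<kappa>_def e_def
      using powr_mult[of "h/2" "E s" \<epsilon>] by simp
    have U1: "\<bar>U s\<bar> \<le> U0 + 2 * Kb u v * \<sigma>\<^sup>2" unfolding s_def \<sigma>_def using U_s_bound[OF n] .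
    have K1: "Kb u v \<le> (K0 + C * \<sigma> * e powr \<eta>) * exp \<Gamma>0"
      unfolding \<sigma>_def e_def s_def using Kb_le[OF n] .
    have en: "e powr \<eta> \<ge> 0" by simp
    have s2: "\<sigma>\<^sup>2 \<le> \<sigma>^3" using \<sigma>1 by (simp add: power2_eq_square power3_eq_cube)
    have "\<bar>U s\<bar> \<le> U0 + 2 * ((K0 + C * \<sigma> * e powr \<eta>) * exp \<Gamma>0) * \<sigma>\<^sup>2"
    proof -
      have "Kb u v * \<sigma>\<^sup>2 \<le> ((K0 + C * \<sigma> * e powr \<eta>) * exp \<Gamma>0) * \<sigma>\<^sup>2"
        by (rule mult_right_mono[OF K1]) simp
      then show ?thesis using U1 by linarith
    qed
    also have "\<dots> = U0 + 2 * exp \<Gamma>0 * (K0 * \<sigma>\<^sup>2 + C * e powr \<eta> * \<sigma>^3)"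
      by (simp add: algebra_simps power2_eq_square power3_eq_cube)
    also have "\<dots> \<le> U0 + 2 * exp \<Gamma>0 * (K0 * \<sigma>^3 + C * e powr \<eta> * \<sigma>^3)"
      using s2 K0_nonneg by (simp add: mult_left_mono)
    also have "\<dots> = U0 + 2 * exp \<Gamma>0 * (K0 + C * e powr \<eta>) * \<sigma>^3" by (simp add: algebra_simps)
    also have "\<dots> \<le> U0 + 2 * exp \<Gamma>0 * (K0 + C * e powr \<eta>) * (D1^3 * (\<kappa> powr \<epsilon> * e powr \<epsilon>))"
      using sig3 Ye K0_nonneg C0 by (intro add_left_mono mult_left_mono) auto
    also have "\<dots> = U0 + 2 * exp \<Gamma>0 * D1^3 * \<kappa> powr \<epsilon> * (K0 * e powr \<epsilon> + C * e powr (\<eta> + \<epsilon>))"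
      by (simp add: algebra_simps powr_add)
    also have "\<dots> \<le> M * e powr (\<eta> + \<epsilon>)"
    proof -
      have ee: "e powr (\<eta> + \<epsilon>) = e powr \<eta> * e powr \<epsilon>" by (simp add: powr_add)
      have em1: "Emin powr \<eta> \<le> e powr \<eta>" using emin Emin_pos eta0 by (intro powr_mono2) auto
      have em2: "Emin powr (\<eta>+\<epsilon>) \<le> e powr (\<eta>+\<epsilon>)" using emin Emin_pos eta0 eps by (intro powr_mono2) auto
      have ep1: "Emin powr \<eta> > 0" "Emin powr (\<eta>+\<epsilon>) > 0" using Emin_pos by auto
      have t1: "U0 \<le> U0 / Emin powr (\<eta>+\<epsilon>) * e powr (\<eta> + \<epsilon>)"
      proof -
        have "U0 / Emin powr (\<eta>+\<epsilon>) * e powr (\<eta> + \<epsilon>) \<ge> U0 / Emin powr (\<eta>+\<epsilon>) * Emin powr (\<eta>+\<epsilon>)"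
          using em2 U0_nonneg ep1 by (intro mult_left_mono) auto
        then show ?thesis using ep1 by simp
      qed
      have t2: "K0 * e powr \<epsilon> \<le> K0 / Emin powr \<eta> * e powr (\<eta> + \<epsilon>)"
      proof -
        have "K0 / Emin powr \<eta> * e powr (\<eta> + \<epsilon>) = K0 * e powr \<epsilon> * (e powr \<eta> / Emin powr \<eta>)"
          unfolding ee by (simp add: field_simps)
        moreover have "e powr \<eta> / Emin powr \<eta> \<ge> 1" using em1 ep1 by simp
        moreover have "K0 * e powr \<epsilon> \<ge> 0" using K0_nonneg by simp
        ultimately show ?thesis by (metis mult_le_cancel_left1 order_refl mult_le_cancel_left1 order.trans
              mult_left_mono mult_1_right)
      qed
      have c: "2 * exp \<Gamma>0 * D1^3 * \<kappa> powr \<epsilon> \<ge> 0" using D1p by simp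
      have "2 * exp \<Gamma>0 * D1^3 * \<kappa> powr \<epsilon> * (K0 * e powr \<epsilon> + C * e powr (\<eta> + \<epsilon>))
          \<le> 2 * exp \<Gamma>0 * D1^3 * \<kappa> powr \<epsilon> * ((K0 / Emin powr \<eta> + C) * e powr (\<eta> + \<epsilon>))"
        using t2 c by (intro mult_left_mono) (auto simp: algebra_simps)
      then show ?thesis using t1 unfolding M_def by (simp add: algebra_simps)
    qed
    finally show ?thesis unfolding s_def e_def .
  qed
  then show ?thesis by blast
qed

end


section \<open>Grassmann algebra basics\<close>

lemma gsign_pm: "gsign B C = 1 \<or> gsign B C = -1"
  unfolding gsign_def by (cases "even (card {(i, j). i \<in> B \<and> j \<in> C \<and> j < i})") auto

lemma gsign_abs[simp]: "\<bar>gsign B C\<bar> = 1"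
  using gsign_pm[of B C] by auto

lemma gsign_empty1[simp]: "gsign {} C = 1" unfolding gsign_def by simp
lemma gsign_empty2[simp]: "gsign B {} = 1" unfolding gsign_def by simp

lemma gmul_out: "\<not> A \<subseteq> {1..N} \<Longrightarrow> gmul N x y A = 0"
  unfolding gmul_def by simp

lemma gmul_in: "A \<subseteq> {1..N} \<Longrightarrow> gmul N x y A = (\<Sum>B\<in>Pow A. gsign B (A - B) * x B * y (A - B))"
  unfolding gmul_def by simp

lemma gmul_empty[simp]: "gmul N x y {} = x {} * y {}"
  unfolding gmul_def by simp

definition mid :: "grass \<Rightarrow> grass \<Rightarrow> nat set \<Rightarrow> real" where
  "mid x y A = (\<Sum>B\<in>Pow A - {{}, A}. gsign B (A - B) * x B * y (A - B))"

lemma gmul_split: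
  assumes "A \<subseteq> {1..N}" "A \<noteq> {}"
  shows "gmul N x y A = x {} * y A + x A * y {} + mid x y A"
proof -
  have fin: "finite (Pow A)" using assms(1) finite_subset by (simp add: finite_subset[OF assms(1)])
  have e: "{} \<in> Pow A" "A \<in> Pow A - {{}}" using assms by auto
  have "gmul N x y A = (\<Sum>B\<in>Pow A. gsign B (A - B) * x B * y (A - B))" using gmul_in[OF assms(1)] .
  also have "\<dots> = gsign {} (A - {}) * x {} * y (A - {}) + (\<Sum>B\<in>Pow A - {{}}. gsign B (A - B) * x B * y (A - B))"
    by (rule sum.remove[OF fin e(1)])
  also have "(\<Sum>B\<in>Pow A - {{}}. gsign B (A - B) * x B * y (A - B)) =
      gsign A (A - A) * x A * y (A - A) + (\<Sum>B\<in>Pow A - {{}} - {A}. gsign B (A - B) * x B * y (A - B))"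
    by (rule sum.remove) (use fin e(2) in auto)
  also have "Pow A - {{}} - {A} = Pow A - {{}, A}" by auto
  finally show ?thesis unfolding mid_def by simp
qed

lemma mid_bound: "\<bar>mid x y A\<bar> \<le> (\<Sum>B\<in>Pow A - {{}, A}. \<bar>x B\<bar> * \<bar>y (A - B)\<bar>)"
  unfolding mid_def by (rule order_trans[OF sum_abs]) (simp add: abs_mult)

lemma gmul_bound: "\<bar>gmul N x y A\<bar> \<le> (\<Sum>B\<in>Pow A. \<bar>x B\<bar> * \<bar>y (A - B)\<bar>)"
proof (cases "A \<subseteq> {1..N}")
  case True
  have "\<bar>\<Sum>B\<in>Pow A. gsign B (A - B) * x B * y (A - B)\<bar> \<le> (\<Sum>B\<in>Pow A. \<bar>gsign B (A - B) * x B * y (A - B)\<bar>)"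
    by (rule sum_abs)
  also have "\<dots> = (\<Sum>B\<in>Pow A. \<bar>x B\<bar> * \<bar>y (A - B)\<bar>)" by (simp add: abs_mult)
  finally show ?thesis unfolding gmul_in[OF True] .
next
  case False
  then show ?thesis by (simp add: gmul_out sum_nonneg)
qed

lemma odd_body: "is_odd N x \<Longrightarrow> x {} = 0"
  unfolding is_odd_def by auto

lemma even_odd_card: "is_even N x \<Longrightarrow> x B \<noteq> 0 \<Longrightarrow> even (card B)"
  unfolding is_even_def by auto

lemma inv_count:
  fixes B C :: "nat set"
  assumes "finite B" "finite C" "B \<inter> C = {}"
  shows "card {(i, j). i \<in> B \<and> j \<in> C \<and> j < i} + card {(i, j). i \<in> C \<and> j \<in> B \<and> j < i} = card B * card C"
proof -
  let ?S1 = "{(i, j). i \<in> B \<and> j \<in> C \<and> j < i}"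
  let ?S2 = "{(i, j). i \<in> C \<and> j \<in> B \<and> j < i}"
  let ?S2' = "{(i, j). i \<in> B \<and> j \<in> C \<and> i < j}"
  have fin: "finite (B \<times> C)" using assms by simp
  have s1: "?S1 \<subseteq> B \<times> C" and s2': "?S2' \<subseteq> B \<times> C" by auto
  have c2: "card ?S2 = card ?S2'"
  proof -
    have "?S2' = (\<lambda>(i,j). (j,i)) ` ?S2" by (auto simp: image_iff)
    moreover have "inj_on (\<lambda>(i,j). (j,i)) ?S2" by (auto simp: inj_on_def)
    ultimately show ?thesis by (simp add: card_image)
  qed
  have un: "?S1 \<union> ?S2' = B \<times> C"
  proof
    show "B \<times> C \<subseteq> ?S1 \<union> ?S2'"
    proof
      fix p assume p: "p \<in> B \<times> C"
      obtain i j where ij: "p = (i,j)" by force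
      have "i \<noteq> j" using p ij assms(3) by auto
      then have "j < i \<or> i < j" by arith
      then show "p \<in> ?S1 \<union> ?S2'" using p ij by auto
    qed
  qed auto
  have di: "?S1 \<inter> ?S2' = {}" by auto
  have "card (B \<times> C) = card ?S1 + card ?S2'"
    using card_Un_disjoint[of ?S1 ?S2'] finite_subset[OF s1 fin] finite_subset[OF s2' fin] un di by simp
  then show ?thesis using c2 by (simp add: card_cartesian_product)
qed

lemma gsign_swap_even:
  assumes "finite B" "finite C" "B \<inter> C = {}" "even (card B)"
  shows "gsign B C = gsign C B"
proof -
  have "gsign B C * gsign C B = (-1) ^ (card B * card C)"
    unfolding gsign_def using inv_count[OF assms(1-3)] by (simp add: power_add[symmetric])
  also have "\<dots> = 1" using assms(4) by simp
  finally have p: "gsign B C * gsign C B = 1" .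
  then show ?thesis using gsign_pm[of B C] gsign_pm[of C B] by auto
qed

lemma gmul_comm_even:
  assumes "is_even N x" "is_even N y"
  shows "gmul N x y = gmul N y x"
proof
  fix A
  show "gmul N x y A = gmul N y x A"
  proof (cases "A \<subseteq> {1..N}")
    case False then show ?thesis by (simp add: gmul_out)
  next
    case True
    have finA: "finite A" using True finite_subset by blast
    have bij: "bij_betw (\<lambda>B. A - B) (Pow A) (Pow A)"
      by (rule bij_betw_byWitness[where f'="\<lambda>B. A - B"]) auto
    have "gmul N y x A = (\<Sum>B\<in>Pow A. gsign B (A - B) * y B * x (A - B))" using gmul_in[OF True] .
    also have "\<dots> = (\<Sum>B\<in>Pow A. gsign (A - B) (A - (A - B)) * y (A - B) * x (A - (A - B)))"
      using sum.reindex_bij_betw[OF bij, of "\<lambda>B. gsign B (A - B) * y B * x (A - B)"] by simp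
    also have "\<dots> = (\<Sum>B\<in>Pow A. gsign B (A - B) * x B * y (A - B))"
    proof (rule sum.cong[OF refl])
      fix B assume "B \<in> Pow A"
      then have BA: "B \<subseteq> A" by simp
      have e: "A - (A - B) = B" using BA by auto
      show "gsign (A - B) (A - (A - B)) * y (A - B) * x (A - (A - B)) = gsign B (A - B) * x B * y (A - B)"
      proof (cases "x B = 0 \<or> y (A - B) = 0")
        case True then show ?thesis unfolding e by auto
      next
        case False
        then have ev: "even (card B)" using even_odd_card[OF assms(1)] by blast
        have "gsign B (A - B) = gsign (A - B) B"
          using gsign_swap_even[OF finite_subset[OF BA finA] _ _ ev] finA by auto
        then show ?thesis unfolding e by simp
      qed
    qed
    also have "\<dots> = gmul N x y A" using gmul_in[OF True] by simp
    finally show ?thesis by simp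
  qed
qed

lemma gmul_cancel:
  assumes "x {} \<noteq> 0" "\<And>A. \<not> A \<subseteq> {1..N} \<Longrightarrow> y A = 0" "\<And>A. \<not> A \<subseteq> {1..N} \<Longrightarrow> y' A = 0"
    and eq: "gmul N x y = gmul N x y'"
  shows "y = y'"
proof -
  have main: "\<forall>A. A \<subseteq> {1..N} \<longrightarrow> card A = n \<longrightarrow> y A = y' A" for n
  proof (induction n rule: less_induct)
    case (less n)
    show ?case
    proof (intro allI impI)
      fix A assume A: "A \<subseteq> {1..N}" "card A = n"
      have finA: "finite A" using A(1) finite_subset by blast
      have r: "(\<Sum>B\<in>Pow A - {{}}. gsign B (A - B) * x B * y (A - B)) =
               (\<Sum>B\<in>Pow A - {{}}. gsign B (A - B) * x B * y' (A - B))"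
      proof (rule sum.cong[OF refl])
        fix B assume B: "B \<in> Pow A - {{}}"
        have "A - B \<subset> A" using B by auto
        then have "card (A - B) < n" using finA A(2) psubset_card_mono by blast
        moreover have "A - B \<subseteq> {1..N}" using A(1) by auto
        ultimately have "y (A - B) = y' (A - B)" using less.IH by blast
        then show "gsign B (A - B) * x B * y (A - B) = gsign B (A - B) * x B * y' (A - B)" by simp
      qed
      have fin: "finite (Pow A)" using finA by simp
      have e: "{} \<in> Pow A" by simp
      have "gmul N x y A = x {} * y A + (\<Sum>B\<in>Pow A - {{}}. gsign B (A - B) * x B * y (A - B))"
        unfolding gmul_in[OF A(1)] using sum.remove[OF fin e, of "\<lambda>B. gsign B (A - B) * x B * y (A - B)"] by simp
      moreover have "gmul N x y' A = x {} * y' A + (\<Sum>B\<in>Pow A - {{}}. gsign B (A - B) * x B * y' (A - B))"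
        unfolding gmul_in[OF A(1)] using sum.remove[OF fin e, of "\<lambda>B. gsign B (A - B) * x B * y' (A - B)"] by simp
      moreover have "gmul N x y A = gmul N x y' A" using eq by simp
      ultimately have "x {} * y A = x {} * y' A" using r by linarith
      then show "y A = y' A" using assms(1) by simp
    qed
  qed
  show ?thesis
  proof
    fix A show "y A = y' A"
      using main[of "card A"] assms(2,3) by (cases "A \<subseteq> {1..N}") auto
  qed
qed


section \<open>Vectors and arcs\<close>

definition det :: "int\<times>int \<Rightarrow> int\<times>int \<Rightarrow> int" where
  "det x y = fst x * snd y - snd x * fst y"

definition normv :: "int\<times>int \<Rightarrow> int\<times>int" where
  "normv x = (if 0 < snd x \<or> (snd x = 0 \<and> 0 < fst x) then x else vneg x)"

definition okv :: "int\<times>int \<Rightarrow> bool" where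
  "okv x = coprime (fst x) (snd x)"

lemma det_vneg1[simp]: "det (vneg x) y = - det x y" by (simp add: det_def vneg_def)
lemma det_vneg2[simp]: "det x (vneg y) = - det x y" by (simp add: det_def vneg_def)
lemma det_swap: "det y x = - det x y" by (simp add: det_def)
lemma det_add1[simp]: "det (vadd x y) y = det x y" by (simp add: det_def vadd_def algebra_simps)
lemma det_add2[simp]: "det x (vadd x y) = det x y" by (simp add: det_def vadd_def algebra_simps)
lemma det_sub1[simp]: "det (vsub x y) y = det x y" by (simp add: det_def vsub_def algebra_simps)
lemma det_sub2[simp]: "det x (vsub x y) = - det x y" by (simp add: det_def vsub_def algebra_simps)
lemma vneg_vneg[simp]: "vneg (vneg x) = x" by (simp add: vneg_def)

lemma okv_det: assumes "\<bar>det x y\<bar> = 1" shows "okv x"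
  unfolding okv_def
proof (rule coprimeI)
  fix c assume c: "c dvd fst x" "c dvd snd x"
  have "c dvd det x y" unfolding det_def using c by simp
  then have "c dvd \<bar>det x y\<bar>" by simp
  then show "is_unit c" using assms by simp
qed

lemma okv_vneg[simp]: "okv (vneg x) = okv x" by (simp add: okv_def vneg_def)

lemma is_arc_normv: assumes "okv x" shows "is_arc (normv x)"
proof -
  have cp: "coprime (fst x) (snd x)" using assms unfolding okv_def .
  show ?thesis
  proof (cases "0 < snd x \<or> (snd x = 0 \<and> 0 < fst x)")
    case True
    then show ?thesis unfolding normv_def is_arc_def using cp by auto
  next
    case False
    show ?thesis
    proof (cases "snd x = 0")
      case True
      then have "is_unit (fst x)" using cp by simp
      then have "fst x = 1 \<or> fst x = -1" by auto
      then show ?thesis unfolding normv_def is_arc_def vneg_def using False True by auto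
    next
      case F2: False
      then have "snd x < 0" using False by auto
      then show ?thesis unfolding normv_def is_arc_def vneg_def using False cp by auto
    qed
  qed
qed

lemma normv_vneg[simp]: "normv (vneg x) = normv x"
  unfolding normv_def vneg_def by (cases x) auto

lemma normv_cases: "normv x = x \<or> normv x = vneg x"
  unfolding normv_def by auto

lemma det_normv_abs: "\<bar>det (normv x) (normv y)\<bar> = \<bar>det x y\<bar>"
  using normv_cases[of x] normv_cases[of y] by auto

lemma adj_normv: "arcs_adjacent (normv x) (normv y) \<longleftrightarrow> \<bar>det x y\<bar> = 1"
  unfolding arcs_adjacent_def using det_normv_abs[of x y] by (simp add: det_def)

lemma normv_arc: "is_arc g \<Longrightarrow> normv g = g"
  unfolding normv_def is_arc_def by auto

lemma spin_sign_vneg[simp]: "spin_sign al be (vneg x) = spin_sign al be x"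
  unfolding spin_sign_def spin_q_def vneg_def by simp

lemma spin_sign_normv[simp]: "spin_sign al be (normv x) = spin_sign al be x"
  using normv_cases[of x] by auto

lemma spin_sign_addsub: "spin_sign al be (vadd x y) = spin_sign al be (vsub x y)"
proof -
  have "odd (fst x + fst y) = odd (fst x - fst y)" "odd (snd x + snd y) = odd (snd x - snd y)" by presburger+
  then show ?thesis unfolding spin_sign_def spin_q_def vadd_def vsub_def by simp
qed

lemma normv_eq: "normv x = normv y \<Longrightarrow> x = y \<or> x = vneg y"
  using normv_cases[of x] normv_cases[of y] by (auto simp: vneg_def prod_eq_iff)

lemma tri_facts: assumes "\<bar>det x y\<bar> = 1"
  shows "is_triangulation (normv x) (normv y) (normv (vadd x y))"
    "is_triangulation (normv x) (normv y) (normv (vsub x y))"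
    "normv (vsub x y) \<noteq> normv (vadd x y)"
    "okv x" "okv y" "okv (vadd x y)" "okv (vsub x y)"
proof -
  show ox: "okv x" using okv_det[OF assms] .
  show oy: "okv y" using okv_det[of y x] assms det_swap[of y x] by simp
  show oa: "okv (vadd x y)" using okv_det[of "vadd x y" y] assms by simp
  show os: "okv (vsub x y)" using okv_det[of "vsub x y" y] assms by simp
  have d1: "\<bar>det y (vadd x y)\<bar> = 1" using assms det_swap[of y "vadd x y"] by simp
  have d2: "\<bar>det y (vsub x y)\<bar> = 1" using assms det_swap[of y "vsub x y"] by simp
  show "is_triangulation (normv x) (normv y) (normv (vadd x y))"
    unfolding is_triangulation_def adj_normv using ox oy oa is_arc_normv assms d1 by simp
  show "is_triangulation (normv x) (normv y) (normv (vsub x y))"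
    unfolding is_triangulation_def adj_normv using ox oy os is_arc_normv assms d2 by simp
  show "normv (vsub x y) \<noteq> normv (vadd x y)"
  proof
    assume "normv (vsub x y) = normv (vadd x y)"
    then have "vsub x y = vadd x y \<or> vsub x y = vneg (vadd x y)" by (rule normv_eq)
    then have "y = (0,0) \<or> x = (0,0)" by (auto simp: vsub_def vadd_def vneg_def prod_eq_iff)
    then show False using assms by (auto simp: det_def)
  qed
qed


lemma gadd_app[simp]: "gadd x y A = x A + y A" by (simp add: gadd_def)
lemma gscale_app[simp]: "gscale r x A = r * x A" by (simp add: gscale_def)
lemma spin_sign_pm: "spin_sign al be x = 1 \<or> spin_sign al be x = -1" by (simp add: spin_sign_def)
lemma spin_sign_abs[simp]: "\<bar>spin_sign al be x\<bar> = 1" by (simp add: spin_sign_def)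

locale stp =
  fixes N :: nat and lam :: "arc \<Rightarrow> grass" and mu1 mu2 :: "arc set \<Rightarrow> grass" and al be :: bool
  assumes pt: "super_teich_point N lam mu1 mu2 al be"
begin

definition lamv :: "int\<times>int \<Rightarrow> grass" where "lamv x = lam (normv x)"
definition ev :: "int\<times>int \<Rightarrow> real" where "ev x = lamv x {}"
definition mm :: "arc set \<Rightarrow> grass" where "mm T = gmul N (mu1 T) (mu2 T)"

lemma arc_facts: "is_arc g \<Longrightarrow> is_even N (lam g) \<and> body (lam g) > 0"
  using pt unfolding super_teich_point_def by blast

lemma tri_odd: "is_triangulation a b c \<Longrightarrow> is_odd N (mu1 {a,b,c}) \<and> is_odd N (mu2 {a,b,c})"
  using pt unfolding super_teich_point_def by blast

lemma ptol_arcs: "is_triangulation a b c \<Longrightarrow> is_triangulation a b d \<Longrightarrow> c \<noteq> d \<Longrightarrow>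
   gmul N (lam c) (lam d) = gadd (gadd (gmul N (lam a) (lam a)) (gmul N (lam b) (lam b)))
                (gmul N (gmul N (lam a) (lam b)) (W_inv N mu1 mu2 al be a b c))"
  using pt unfolding super_teich_point_def by blast

lemma ev_pos: "okv x \<Longrightarrow> ev x > 0"
  unfolding ev_def lamv_def using arc_facts[OF is_arc_normv] by (simp add: body_def)

lemma lamv_even: "okv x \<Longrightarrow> is_even N (lamv x)"
  unfolding lamv_def using arc_facts[OF is_arc_normv] by simp

lemma ev_vneg[simp]: "ev (vneg x) = ev x" unfolding ev_def lamv_def by simp
lemma lamv_vneg[simp]: "lamv (vneg x) = lamv x" unfolding lamv_def by simp

lemma lamv_out: "okv x \<Longrightarrow> \<not> A \<subseteq> {1..N} \<Longrightarrow> lamv x A = 0"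
  using lamv_even[of x] unfolding is_even_def in_grass_def by blast

lemma ptolv: assumes "\<bar>det x y\<bar> = 1"
  shows "gmul N (lamv (vsub x y)) (lamv (vadd x y)) =
    gadd (gadd (gmul N (lamv x) (lamv x)) (gmul N (lamv y) (lamv y)))
      (gmul N (gmul N (lamv x) (lamv y))
         (gscale (spin_sign al be (vsub x y)) (mm {normv x, normv y, normv (vsub x y)})))"
  using ptol_arcs[OF tri_facts(2,1,3)[OF assms]] unfolding lamv_def W_inv_def mm_def by simp

lemma ptolv': assumes "\<bar>det x y\<bar> = 1"
  shows "gmul N (lamv (vadd x y)) (lamv (vsub x y)) =
    gadd (gadd (gmul N (lamv x) (lamv x)) (gmul N (lamv y) (lamv y)))
      (gmul N (gmul N (lamv x) (lamv y))
         (gscale (spin_sign al be (vadd x y)) (mm {normv x, normv y, normv (vadd x y)})))"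
  using ptol_arcs[OF tri_facts(1,2)[OF assms] tri_facts(3)[OF assms, symmetric]]
  unfolding lamv_def W_inv_def mm_def by simp

lemma mm_body: "is_triangulation a b c \<Longrightarrow> mm {a,b,c} {} = 0"
  unfolding mm_def using tri_odd[of a b c] odd_body by auto

lemma body_ptol: assumes "\<bar>det x y\<bar> = 1"
  shows "ev (vadd x y) * ev (vsub x y) = (ev x)\<^sup>2 + (ev y)\<^sup>2"
proof -
  have "gmul N (lamv (vsub x y)) (lamv (vadd x y)) {} = ev (vsub x y) * ev (vadd x y)"
    unfolding ev_def by simp
  moreover have "mm {normv x, normv y, normv (vsub x y)} {} = 0"
    using mm_body[OF tri_facts(2)[OF assms]] .
  ultimately show ?thesis using fun_cong[OF ptolv[OF assms], of "{}"] unfolding ev_def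
    by (simp add: power2_eq_square mult.commute)
qed

lemma mm_const: assumes "\<bar>det x y\<bar> = 1"
  shows "mm {normv x, normv y, normv (vsub x y)} = mm {normv x, normv y, normv (vadd x y)}"
proof -
  let ?W1 = "gscale (spin_sign al be (vsub x y)) (mm {normv x, normv y, normv (vsub x y)})"
  let ?W2 = "gscale (spin_sign al be (vadd x y)) (mm {normv x, normv y, normv (vadd x y)})"
  have ev1: "is_even N (lamv (vsub x y))" "is_even N (lamv (vadd x y))"
    using lamv_even tri_facts[OF assms] by auto
  have c: "gmul N (lamv (vsub x y)) (lamv (vadd x y)) = gmul N (lamv (vadd x y)) (lamv (vsub x y))"
    using gmul_comm_even[OF ev1] .
  have eq: "gmul N (gmul N (lamv x) (lamv y)) ?W1 = gmul N (gmul N (lamv x) (lamv y)) ?W2"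
  proof
    fix A
    have "gadd (gadd (gmul N (lamv x) (lamv x)) (gmul N (lamv y) (lamv y))) (gmul N (gmul N (lamv x) (lamv y)) ?W1) A
        = gadd (gadd (gmul N (lamv x) (lamv x)) (gmul N (lamv y) (lamv y))) (gmul N (gmul N (lamv x) (lamv y)) ?W2) A"
      using c ptolv[OF assms] ptolv'[OF assms] by simp
    then show "gmul N (gmul N (lamv x) (lamv y)) ?W1 A = gmul N (gmul N (lamv x) (lamv y)) ?W2 A" by simp
  qed
  have b: "gmul N (lamv x) (lamv y) {} \<noteq> 0"
    using ev_pos tri_facts(4,5)[OF assms] unfolding ev_def by (simp add: less_imp_neq[symmetric])
  have W: "?W1 = ?W2"
    by (rule gmul_cancel[OF b _ _ eq]) (simp_all add: mm_def gmul_out)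
  have s: "spin_sign al be (vsub x y) = spin_sign al be (vadd x y)" using spin_sign_addsub by simp
  show ?thesis
  proof
    fix A
    have "spin_sign al be (vadd x y) * mm {normv x, normv y, normv (vsub x y)} A =
          spin_sign al be (vadd x y) * mm {normv x, normv y, normv (vadd x y)} A"
      using fun_cong[OF W, of A] s by simp
    then show "mm {normv x, normv y, normv (vsub x y)} A = mm {normv x, normv y, normv (vadd x y)} A"
      using spin_sign_pm[of al be "vadd x y"] by auto
  qed
qed

end


section \<open>Real lemmas for Markov descent\<close>

definition Hv :: "real \<Rightarrow> real \<Rightarrow> real \<Rightarrow> real" where
  "Hv p q r = (p\<^sup>2 + q\<^sup>2 + r\<^sup>2) / (p * q * r)"

lemma Hv_flip: fixes p q r s :: real
  assumes "p > 0" "q > 0" "r > 0" "s > 0" "r * s = p\<^sup>2 + q\<^sup>2"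
  shows "Hv p q s = Hv p q r" "r + s = Hv p q r * p * q"
proof -
  have a: "Hv p q r = (r + s) / (p * q)"
    unfolding Hv_def using assms by (simp add: field_simps power2_eq_square; simp add: algebra_simps)
  have b: "Hv p q s = (r + s) / (p * q)"
    unfolding Hv_def using assms by (simp add: field_simps power2_eq_square; simp add: algebra_simps)
  show "Hv p q s = Hv p q r" using a b by simp
  show "r + s = Hv p q r * p * q" using a assms by simp
qed

lemma markov_X: fixes p q r h :: real
  assumes "p > 0" "q > 0" "r > 0" "h = Hv p q r"
  shows "(h*p)\<^sup>2 + (h*q)\<^sup>2 + (h*r)\<^sup>2 = (h*p)*(h*q)*(h*r)"
proof -
  have "h * (p*q*r) = p\<^sup>2 + q\<^sup>2 + r\<^sup>2" unfolding assms(4) Hv_def using assms by simp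
  then have "(h*p)*(h*q)*(h*r) = h\<^sup>2 * (p\<^sup>2 + q\<^sup>2 + r\<^sup>2)"
    by (simp add: power2_eq_square algebra_simps; metis mult.assoc mult.left_commute)
  then show ?thesis by (simp add: power_mult_distrib algebra_simps)
qed

definition redx :: "real \<Rightarrow> real \<Rightarrow> real \<Rightarrow> bool" where
  "redx x y z \<longleftrightarrow> x*y \<ge> 2*z \<and> y*z \<ge> 2*x \<and> x*z \<ge> 2*y"

lemma markov_gt2: fixes x y z :: real
  assumes "x > 0" "y > 0" "z > 0" "x\<^sup>2+y\<^sup>2+z\<^sup>2 = x*y*z"
  shows "(x - 2) * (y * z) \<ge> x\<^sup>2" "x > 2"
proof -
  have e: "(x - 2) * (y * z) = x\<^sup>2 + (y - z)\<^sup>2" using assms(4)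
    by (simp add: power2_eq_square algebra_simps)
  then show "(x - 2) * (y * z) \<ge> x\<^sup>2" by simp
  have "(x - 2) * (y * z) > 0" using e assms(1) by (simp add: add_pos_nonneg)
  moreover have yz: "y * z > 0" using assms(2,3) by simp
  ultimately show "x > 2" by (smt (verit) mult_nonpos_nonneg)
qed

lemma KR_case: fixes x y z :: real
  assumes pos: "x > 0" "y > 0" "z > 0" and mk: "x\<^sup>2+y\<^sup>2+z\<^sup>2 = x*y*z"
    and c: "x * (x*y - z) < 2*y"
  shows "x*y*z - x*y*(x*y - z) \<ge> 128 / (x*y*z)"
proof -
  have x2: "x > 2" using markov_gt2[OF pos mk] by simp
  have mk': "y\<^sup>2+x\<^sup>2+z\<^sup>2 = y*x*z" using mk by (simp add: algebra_simps)
  have y2: "y > 2" using markov_gt2[OF pos(2,1,3) mk'] by simp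
  have mx: "(x - 2) * (y * z) \<ge> x\<^sup>2" using markov_gt2[OF pos mk] by simp
  define D where "D = x*y*z - x*y*(x*y - z)"
  have D: "D = x*y*(2*z - x*y)" unfolding D_def by (simp add: algebra_simps)
  have "x * (2*z - x*y) > x*x*y - 4*y" using c by (simp add: algebra_simps)
  then have "x*y*(x*(2*z - x*y)) > x*y*(x*x*y - 4*y)" using pos by (intro mult_strict_left_mono) auto
  then have "x * D > x * (y\<^sup>2 * (x\<^sup>2 - 4))" unfolding D by (simp add: power2_eq_square algebra_simps)
  then have D1: "D > y\<^sup>2 * (x\<^sup>2 - 4)" using pos by simp
  have "x*y*z * (y\<^sup>2 * (x\<^sup>2 - 4)) = x * y\<^sup>2 * (x + 2) * ((x - 2) * (y * z))"
    by (simp add: power2_eq_square algebra_simps)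
  also have "\<dots> \<ge> x * y\<^sup>2 * (x + 2) * x\<^sup>2" using mx pos by (intro mult_left_mono) auto
  finally have q: "x*y*z * (y\<^sup>2 * (x\<^sup>2 - 4)) \<ge> x^3 * y\<^sup>2 * (x + 2)"
    by (simp add: power2_eq_square power3_eq_cube algebra_simps)
  have "x^3 \<ge> 8" using x2 power_mono[of 2 x 3] by simp
  moreover have "y\<^sup>2 \<ge> 4" using y2 power_mono[of 2 y 2] by simp
  moreover have "x + 2 \<ge> 4" using x2 by simp
  ultimately have "x^3 * y\<^sup>2 * (x + 2) \<ge> 8 * 4 * 4"
    by (intro mult_mono) auto
  then have "x*y*z * (y\<^sup>2 * (x\<^sup>2 - 4)) \<ge> 128" using q by simp
  then have "y\<^sup>2 * (x\<^sup>2 - 4) \<ge> 128 / (x*y*z)" using pos by (simp add: field_simps)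
  then show ?thesis using D1 unfolding D_def by simp
qed

lemma KR: fixes x y z :: real
  assumes pos: "x > 0" "y > 0" "z > 0" and mk: "x\<^sup>2+y\<^sup>2+z\<^sup>2 = x*y*z" and v: "x*y < 2*z"
  shows "x*y - z > 0" "x\<^sup>2 + y\<^sup>2 + (x*y - z)\<^sup>2 = x*y*(x*y - z)" "x*y*(x*y - z) < x*y*z"
    "\<not> redx x y (x*y - z) \<Longrightarrow> x*y*z - x*y*(x*y - z) \<ge> 128 / (x*y*z)"
proof -
  have zz: "z * (x*y - z) = x\<^sup>2 + y\<^sup>2" using mk by (simp add: power2_eq_square algebra_simps)
  have "x\<^sup>2 + y\<^sup>2 > 0" using pos by (intro add_pos_pos) auto
  then have "z * (x*y - z) > 0" using zz by simp
  then show z': "x*y - z > 0" using pos(3) by (simp add: zero_less_mult_iff)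
  show "x\<^sup>2 + y\<^sup>2 + (x*y - z)\<^sup>2 = x*y*(x*y - z)" using mk by (simp add: power2_eq_square algebra_simps)
  show "x*y*(x*y - z) < x*y*z" using v pos by (intro mult_strict_left_mono) auto
  assume nr: "\<not> redx x y (x*y - z)"
  have "x*y \<ge> 2*(x*y - z)" using v by simp
  then have "y*(x*y - z) < 2*x \<or> x*(x*y - z) < 2*y" using nr unfolding redx_def by auto
  then show "x*y*z - x*y*(x*y - z) \<ge> 128 / (x*y*z)"
  proof
    assume "x*(x*y - z) < 2*y"
    then show ?thesis using KR_case[OF pos mk] by simp
  next
    assume a: "y*(x*y - z) < 2*x"
    have mk': "y\<^sup>2+x\<^sup>2+z\<^sup>2 = y*x*z" using mk by (simp add: algebra_simps)
    have "y*(y*x - z) < 2*x" using a by (simp add: mult.commute)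
    then have "y*x*z - y*x*(y*x - z) \<ge> 128 / (y*x*z)" using KR_case[OF pos(2,1,3) mk'] by simp
    then show ?thesis by (simp add: mult.commute mult.left_commute)
  qed
qed


lemma Hv_pos: "p > 0 \<Longrightarrow> q > 0 \<Longrightarrow> r > 0 \<Longrightarrow> Hv p q r > 0"
  unfolding Hv_def by (intro divide_pos_pos add_pos_pos mult_pos_pos) auto

lemma vadd_vsub_cancel[simp]: "vadd (vsub x y) y = x" by (simp add: vadd_def vsub_def)

lemma Hv_perm: "Hv p q r = Hv q r p" "Hv p q r = Hv q p r"
  unfolding Hv_def by (simp_all add: algebra_simps)

lemma redx_perm: "redx x y z = redx y z x" "redx x y z = redx y x z"
  unfolding redx_def by (auto simp: algebra_simps)

context stp
begin

definition good :: "(int\<times>int) \<times> (int\<times>int) \<Rightarrow> bool" where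
  "good p \<longleftrightarrow> \<bar>det (fst p) (snd p)\<bar> = 1"
definition tr1 :: "(int\<times>int) \<times> (int\<times>int) \<Rightarrow> real" where "tr1 p = ev (fst p)"
definition tr2 :: "(int\<times>int) \<times> (int\<times>int) \<Rightarrow> real" where "tr2 p = ev (snd p)"
definition tr3 :: "(int\<times>int) \<times> (int\<times>int) \<Rightarrow> real" where "tr3 p = ev (vadd (fst p) (snd p))"
definition rot :: "(int\<times>int) \<times> (int\<times>int) \<Rightarrow> (int\<times>int) \<times> (int\<times>int)" where
  "rot p = (snd p, vneg (vadd (fst p) (snd p)))"
definition mv :: "(int\<times>int) \<times> (int\<times>int) \<Rightarrow> (int\<times>int) \<times> (int\<times>int)" where
  "mv p = (vsub (fst p) (snd p), snd p)"
definition Ht :: "(int\<times>int) \<times> (int\<times>int) \<Rightarrow> real" where "Ht p = Hv (tr1 p) (tr2 p) (tr3 p)"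

lemma good_rot: "good p \<Longrightarrow> good (rot p)"
  unfolding good_def rot_def by (simp add: det_def vadd_def vneg_def algebra_simps)
lemma good_mv: "good p \<Longrightarrow> good (mv p)"
  unfolding good_def mv_def by simp

lemma tr_rot: "tr1 (rot p) = tr2 p" "tr2 (rot p) = tr3 p" "tr3 (rot p) = tr1 p"
proof -
  show "tr1 (rot p) = tr2 p" unfolding tr1_def tr2_def rot_def by simp
  show "tr2 (rot p) = tr3 p" unfolding tr2_def tr3_def rot_def by simp
  have "vadd (snd p) (vneg (vadd (fst p) (snd p))) = vneg (fst p)"
    by (simp add: vadd_def vneg_def)
  then show "tr3 (rot p) = tr1 p" unfolding tr3_def tr1_def rot_def by simp
qed

lemma tr_mv: "tr1 (mv p) = ev (vsub (fst p) (snd p))" "tr2 (mv p) = tr2 p" "tr3 (mv p) = tr1 p"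
proof -
  show "tr1 (mv p) = ev (vsub (fst p) (snd p))" unfolding tr1_def mv_def by simp
  show "tr2 (mv p) = tr2 p" unfolding tr2_def mv_def by simp
  show "tr3 (mv p) = tr1 p" unfolding tr3_def tr1_def mv_def by simp
qed

lemma tr_pos: assumes "good p" shows "tr1 p > 0" "tr2 p > 0" "tr3 p > 0" "ev (vsub (fst p) (snd p)) > 0"
  using tri_facts[of "fst p" "snd p"] assms ev_pos unfolding good_def tr1_def tr2_def tr3_def by auto

lemma tr_ptol: assumes "good p" shows "ev (vsub (fst p) (snd p)) * tr3 p = (tr1 p)\<^sup>2 + (tr2 p)\<^sup>2"
  using body_ptol[of "fst p" "snd p"] assms unfolding good_def tr1_def tr2_def tr3_def by (simp add: mult.commute)

lemma Ht_rot: "Ht (rot p) = Ht p" unfolding Ht_def tr_rot using Hv_perm by metis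

lemma Ht_mv: assumes "good p" shows "Ht (mv p) = Ht p"
  and "ev (vsub (fst p) (snd p)) = Ht p * tr1 p * tr2 p - tr3 p"
proof -
  note ps = tr_pos[OF assms]
  have f: "Hv (tr1 p) (tr2 p) (ev (vsub (fst p) (snd p))) = Hv (tr1 p) (tr2 p) (tr3 p)"
       "tr3 p + ev (vsub (fst p) (snd p)) = Hv (tr1 p) (tr2 p) (tr3 p) * tr1 p * tr2 p"
    using Hv_flip[OF ps(1,2,3,4)] tr_ptol[OF assms] by (auto simp: mult.commute)
  show "Ht (mv p) = Ht p" unfolding Ht_def tr_mv using f(1) Hv_perm by metis
  show "ev (vsub (fst p) (snd p)) = Ht p * tr1 p * tr2 p - tr3 p" unfolding Ht_def using f(2) by simp
qed

definition Pm :: "real \<Rightarrow> (int\<times>int) \<times> (int\<times>int) \<Rightarrow> real" where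
  "Pm h p = (h * tr1 p) * (h * tr2 p) * (h * tr3 p)"
definition red :: "real \<Rightarrow> (int\<times>int) \<times> (int\<times>int) \<Rightarrow> bool" where
  "red h p = redx (h * tr1 p) (h * tr2 p) (h * tr3 p)"

lemma descent_step:
  assumes g: "good p" and H: "Ht p = h" and v: "(h * tr1 p) * (h * tr2 p) < 2 * (h * tr3 p)"
  shows "good (mv p)" "Ht (mv p) = h" "Pm h (mv p) < Pm h p"
    "\<not> red h (mv p) \<Longrightarrow> Pm h p - Pm h (mv p) \<ge> 128 / Pm h p"
proof -
  note ps = tr_pos[OF g]
  have hp: "h > 0" unfolding H[symmetric] Ht_def using Hv_pos ps by simp
  let ?x = "h * tr1 p" and ?y = "h * tr2 p" and ?z = "h * tr3 p"
  have pos: "?x > 0" "?y > 0" "?z > 0" using hp ps by auto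
  have mk: "?x\<^sup>2 + ?y\<^sup>2 + ?z\<^sup>2 = ?x * ?y * ?z"
    using markov_X[OF ps(1,2,3)] H unfolding Ht_def by simp
  have e: "h * tr1 (mv p) = ?x * ?y - ?z" unfolding tr_mv Ht_mv(2)[OF g] H by (simp add: algebra_simps)
  show "good (mv p)" using good_mv[OF g] .
  show "Ht (mv p) = h" using Ht_mv(1)[OF g] H by simp
  have "Pm h (mv p) = (h * tr1 (mv p)) * ?y * ?x" unfolding Pm_def by (simp add: tr_mv(2,3))
  then have pm: "Pm h (mv p) = ?x * ?y * (?x * ?y - ?z)" unfolding e by (simp add: algebra_simps)
  have pm0: "Pm h p = ?x * ?y * ?z" unfolding Pm_def by simp
  show "Pm h (mv p) < Pm h p" unfolding pm pm0 using KR(3)[OF pos mk v] .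
  assume nr: "\<not> red h (mv p)"
  have n1: "\<not> redx (h * tr1 (mv p)) (h * tr2 (mv p)) (h * tr3 (mv p))" using nr unfolding red_def .
  have n2: "\<not> redx (?x * ?y - ?z) ?y ?x" using n1 unfolding e tr_mv(2,3) .
  have "redx (?x * ?y - ?z) ?y ?x = redx ?x ?y (?x * ?y - ?z)"
    using redx_perm(1)[of "?x * ?y - ?z" ?y ?x] redx_perm(2)[of ?y ?x "?x * ?y - ?z"] by simp
  then have "\<not> redx ?x ?y (?x * ?y - ?z)" using n2 by simp
  then show "Pm h p - Pm h (mv p) \<ge> 128 / Pm h p" unfolding pm pm0 using KR(4)[OF pos mk v] by simp
qed

lemma Pm_rot: "Pm h (rot p) = Pm h p" unfolding Pm_def tr_rot by (simp add: algebra_simps)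
lemma red_rot: "red h (rot p) = red h p" unfolding red_def tr_rot using redx_perm by metis

lemma Pm_pos: "good p \<Longrightarrow> h > 0 \<Longrightarrow> Pm h p > 0" unfolding Pm_def using tr_pos by simp

lemma descent_aux:
  assumes h0: "h > 0" and P0: "P0 > 0"
  shows "\<forall>p. good p \<and> Ht p = h \<and> Pm h p \<le> P0 \<and> Pm h p < of_nat n * (128 / P0) \<longrightarrow>
           (\<exists>q. good q \<and> Ht q = h \<and> red h q)"
proof (induction n)
  case 0
  then show ?case using Pm_pos h0 by (auto simp: less_le_not_le)
next
  case (Suc n)
  show ?case
  proof (intro allI impI)
    fix p assume a: "good p \<and> Ht p = h \<and> Pm h p \<le> P0 \<and> Pm h p < of_nat (Suc n) * (128 / P0)"
    show "\<exists>q. good q \<and> Ht q = h \<and> red h q"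
    proof (cases "red h p")
      case True then show ?thesis using a by blast
    next
      case False
      have "\<exists>p'. good p' \<and> Ht p' = h \<and> Pm h p' = Pm h p \<and>
              (h * tr1 p') * (h * tr2 p') < 2 * (h * tr3 p')"
      proof -
        have "(h * tr1 p) * (h * tr2 p) < 2 * (h * tr3 p) \<or> (h * tr2 p) * (h * tr3 p) < 2 * (h * tr1 p)
              \<or> (h * tr1 p) * (h * tr3 p) < 2 * (h * tr2 p)"
          using False unfolding red_def redx_def by auto
        then show ?thesis
        proof (elim disjE)
          assume "(h * tr1 p) * (h * tr2 p) < 2 * (h * tr3 p)" then show ?thesis using a by blast
        next
          assume v: "(h * tr2 p) * (h * tr3 p) < 2 * (h * tr1 p)"
          show ?thesis by (rule exI[of _ "rot p"]) (use a v in \<open>simp add: good_rot Ht_rot Pm_rot tr_rot\<close>)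
        next
          assume v: "(h * tr1 p) * (h * tr3 p) < 2 * (h * tr2 p)"
          show ?thesis by (rule exI[of _ "rot (rot p)"])
            (use a v in \<open>simp add: good_rot Ht_rot Pm_rot tr_rot mult.commute\<close>)
        qed
      qed
      then obtain p' where p': "good p'" "Ht p' = h" "Pm h p' = Pm h p"
          "(h * tr1 p') * (h * tr2 p') < 2 * (h * tr3 p')" by blast
      note st = descent_step[OF p'(1,2,4)]
      show ?thesis
      proof (cases "red h (mv p')")
        case True then show ?thesis using st(1,2) by blast
      next
        case False
        have d: "Pm h p' - Pm h (mv p') \<ge> 128 / Pm h p'" using st(4)[OF False] .
        have pp: "Pm h p' > 0" using Pm_pos[OF p'(1) h0] .
        have "128 / Pm h p' \<ge> 128 / P0" using pp a p'(3) by (intro divide_left_mono) auto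
        then have "Pm h (mv p') \<le> Pm h p - 128 / P0" using d p'(3) by linarith
        moreover have "of_nat (Suc n) * (128/P0) = of_nat n * (128/P0) + 128/P0" using P0 by (simp add: field_simps)
        ultimately have "Pm h (mv p') < of_nat n * (128 / P0)" using a by linarith
        moreover have "Pm h (mv p') \<le> P0" using st(3) p'(3) a by linarith
        ultimately show ?thesis using Suc.IH st(1,2) by blast
      qed
    qed
  qed
qed

lemma descent: assumes "good p0"
  shows "\<exists>q. good q \<and> Ht q = Ht p0 \<and> red (Ht p0) q"
proof -
  let ?h = "Ht p0"
  have ps: "tr1 p0 > 0" "tr2 p0 > 0" "tr3 p0 > 0" using tr_pos[OF assms] by auto
  have h0: "?h > 0" unfolding Ht_def using Hv_pos ps by simp
  let ?P0 = "Pm ?h p0"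
  have P0: "?P0 > 0" using Pm_pos[OF assms h0] .
  obtain n :: nat where n: "of_nat n > ?P0 / (128 / ?P0)" using reals_Archimedean2 by blast
  have "?P0 < of_nat n * (128 / ?P0)" using n P0 by (simp add: field_simps)
  then have "good p0 \<and> Ht p0 = ?h \<and> Pm ?h p0 \<le> ?P0 \<and> Pm ?h p0 < of_nat n * (128 / ?P0)" using assms by simp
  then show ?thesis using descent_aux[OF h0 P0, of n] by blast
qed

end


section \<open>Stern-Brocot facts\<close>

lemma sbn_det: "sbn u v \<Longrightarrow> det u v = 1"
  by (induction rule: sbn.induct) (simp_all add: det_def vadd_def algebra_simps)

definition shL :: "int\<times>int \<Rightarrow> int\<times>int" where "shL x = (fst x + snd x, snd x)"
definition shR :: "int\<times>int \<Rightarrow> int\<times>int" where "shR x = (fst x, fst x + snd x)"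

lemma shL_add: "shL (vadd x y) = vadd (shL x) (shL y)" by (simp add: shL_def vadd_def)
lemma shR_add: "shR (vadd x y) = vadd (shR x) (shR y)" by (simp add: shR_def vadd_def)

lemma sbn_shL: "sbn u v \<Longrightarrow> sbn (shL u) (shL v)"
proof (induction rule: sbn.induct)
  case root
  have "sbn (1,0) (vadd (1,0) (0,1))" by (rule sbn.lft[OF sbn.root])
  then show ?case by (simp add: shL_def vadd_def)
next
  case (lft u v) then show ?case using sbn.lft by (simp add: shL_add)
next
  case (rgt u v) then show ?case using sbn.rgt by (simp add: shL_add)
qed

lemma sbn_shR: "sbn u v \<Longrightarrow> sbn (shR u) (shR v)"
proof (induction rule: sbn.induct)
  case root
  have "sbn (vadd (1,0) (0,1)) (0,1)" by (rule sbn.rgt[OF sbn.root])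
  then show ?case by (simp add: shR_def vadd_def)
next
  case (lft u v) then show ?case using sbn.lft by (simp add: shR_add)
next
  case (rgt u v) then show ?case using sbn.rgt by (simp add: shR_add)
qed

lemma cop_sub1: assumes "coprime (i::int) j" shows "coprime (i - j) j"
proof (rule coprimeI)
  fix c assume "c dvd i - j" "c dvd j"
  then have "c dvd i" by (metis dvd_add diff_add_cancel)
  then show "is_unit c" using \<open>c dvd j\<close> assms coprime_common_divisor by blast
qed

lemma cop_sub2: assumes "coprime (i::int) j" shows "coprime i (j - i)"
proof (rule coprimeI)
  fix c assume "c dvd i" "c dvd j - i"
  then have "c dvd j" by (metis dvd_add diff_add_cancel)
  then show "is_unit c" using \<open>c dvd i\<close> assms coprime_common_divisor by blast
qed

lemma sbn_cover_aux: "\<forall>i j. i \<ge> 1 \<longrightarrow> j \<ge> 1 \<longrightarrow> coprime i j \<longrightarrow> nat (i + j) = n \<longrightarrow>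
    (\<exists>u v. sbn u v \<and> vadd u v = (i, j))"
proof (induction n rule: less_induct)
  case (less n)
  show ?case
  proof (intro allI impI)
    fix i j :: int assume a: "i \<ge> 1" "j \<ge> 1" "coprime i j" "nat (i + j) = n"
    consider "i = j" | "i > j" | "i < j" by linarith
    then show "\<exists>u v. sbn u v \<and> vadd u v = (i, j)"
    proof cases
      case 1
      then have "is_unit i" using a(3) by simp
      then have "i = 1" using a(1) by auto
      moreover have "vadd (1,0) (0,1) = (1::int, 1::int)" by (simp add: vadd_def)
      ultimately show ?thesis using 1 sbn.root by metis
    next
      case 2
      have cp: "coprime (i - j) j" using cop_sub1[OF a(3)] .
      have lt: "nat ((i - j) + j) < n" using a 2 by simp
      have "\<exists>u v. sbn u v \<and> vadd u v = (i - j, j)"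
        using less.IH[OF lt, rule_format, of "i - j" j] cp a 2 by simp
      then obtain u v where uv: "sbn u v" "vadd u v = (i - j, j)" by blast
      have "sbn (shL u) (shL v)" using sbn_shL[OF uv(1)] .
      moreover have "vadd (shL u) (shL v) = (i, j)" using uv(2) by (simp add: shL_def vadd_def prod_eq_iff)
      ultimately show ?thesis by blast
    next
      case 3
      have cp: "coprime i (j - i)" using cop_sub2[OF a(3)] .
      have lt: "nat (i + (j - i)) < n" using a 3 by simp
      have "\<exists>u v. sbn u v \<and> vadd u v = (i, j - i)"
        using less.IH[OF lt, rule_format, of i "j - i"] cp a 3 by simp
      then obtain u v where uv: "sbn u v" "vadd u v = (i, j - i)" by blast
      have "sbn (shR u) (shR v)" using sbn_shR[OF uv(1)] .
      moreover have "vadd (shR u) (shR v) = (i, j)" using uv(2) by (simp add: shR_def vadd_def prod_eq_iff)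
      ultimately show ?thesis by blast
    qed
  qed
qed

lemma sbn_cover: "i \<ge> 1 \<Longrightarrow> j \<ge> 1 \<Longrightarrow> coprime i j \<Longrightarrow> \<exists>u v. sbn u v \<and> vadd u v = (i, j)"
  using sbn_cover_aux by blast

section \<open>Trees of arcs\<close>

definition tv :: "int\<times>int \<Rightarrow> int\<times>int \<Rightarrow> int\<times>int \<Rightarrow> int\<times>int" where
  "tv P Q x = (fst x * fst P + snd x * fst Q, fst x * snd P + snd x * snd Q)"

lemma tv_add: "tv P Q (vadd x y) = vadd (tv P Q x) (tv P Q y)"
  by (simp add: tv_def vadd_def algebra_simps)
lemma tv_sub: "tv P Q (vsub x y) = vsub (tv P Q x) (tv P Q y)"
  by (simp add: tv_def vsub_def algebra_simps)
lemma tv_neg: "tv P Q (vneg x) = vneg (tv P Q x)"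
  by (simp add: tv_def vneg_def algebra_simps)
lemma tv_det: "det (tv P Q x) (tv P Q y) = det P Q * det x y"
  by (simp add: tv_def det_def algebra_simps)
lemma tv_10[simp]: "tv P Q (1,0) = P" and tv_01[simp]: "tv P Q (0,1) = Q"
  by (simp_all add: tv_def)

lemma node_det: assumes "\<bar>det P Q\<bar> = 1" "sbn u v" shows "\<bar>det (tv P Q u) (tv P Q v)\<bar> = 1"
  using assms sbn_det[OF assms(2)] by (simp add: tv_det abs_mult)


context stp
begin

definition Etr :: "int\<times>int \<Rightarrow> int\<times>int \<Rightarrow> int\<times>int \<Rightarrow> real" where
  "Etr P Q x = (if okv (tv P Q x) then ev (tv P Q x) else 1)"

lemma okv_node: assumes "\<bar>det P Q\<bar> = 1" "sbn u v"
  shows "okv (tv P Q u)" "okv (tv P Q v)" "okv (tv P Q (vadd u v))" "okv (tv P Q (vsub u v))"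
  using tri_facts(4-7)[OF node_det[OF assms]] by (simp_all add: tv_add tv_sub)

lemma Etr_node: assumes "\<bar>det P Q\<bar> = 1" "sbn u v"
  shows "Etr P Q u = ev (tv P Q u)" "Etr P Q v = ev (tv P Q v)"
    "Etr P Q (vadd u v) = ev (tv P Q (vadd u v))" "Etr P Q (vsub u v) = ev (tv P Q (vsub u v))"
  using okv_node[OF assms] unfolding Etr_def by simp_all

lemma tree_rl0: assumes d: "\<bar>det P Q\<bar> = 1" and a: "ev (vsub P Q) \<le> ev (vadd P Q)"
  shows "rl0 (Etr P Q)"
proof
  fix x show "Etr P Q x > 0" unfolding Etr_def using ev_pos by simp
next
  fix x show "Etr P Q (vneg x) = Etr P Q x" unfolding Etr_def tv_neg by simp
next
  fix u v assume n: "sbn u v"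
  show "Etr P Q (vadd u v) * Etr P Q (vsub u v) = (Etr P Q u)\<^sup>2 + (Etr P Q v)\<^sup>2"
    unfolding Etr_node[OF d n] tv_add tv_sub using body_ptol[OF node_det[OF d n]] .
next
  have "Etr P Q (vsub (1,0) (0,1)) = ev (vsub P Q)" "Etr P Q (vadd (1,0) (0,1)) = ev (vadd P Q)"
    using Etr_node[OF d sbn.root] by (simp_all add: tv_add tv_sub)
  then show "Etr P Q (vsub (1,0) (0,1)) \<le> Etr P Q (vadd (1,0) (0,1))" using a by simp
qed

lemma mm_tree: assumes d: "\<bar>det P Q\<bar> = 1"
  shows "sbn u v \<Longrightarrow> mm {normv (tv P Q u), normv (tv P Q v), normv (tv P Q (vsub u v))}
                   = mm {normv P, normv Q, normv (vsub P Q)}"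
proof (induction rule: sbn.induct)
  case root then show ?case by (simp add: tv_sub)
next
  case (lft u v)
  have c: "mm {normv (tv P Q u), normv (tv P Q v), normv (vsub (tv P Q u) (tv P Q v))} =
           mm {normv (tv P Q u), normv (tv P Q v), normv (vadd (tv P Q u) (tv P Q v))}"
    using mm_const[OF node_det[OF d lft.hyps]] .
  have "{normv (tv P Q u), normv (tv P Q (vadd u v)), normv (tv P Q (vsub u (vadd u v)))}
      = {normv (tv P Q u), normv (tv P Q v), normv (vadd (tv P Q u) (tv P Q v))}"
    by (auto simp: tv_add tv_neg)
  then show ?case using c lft.IH by (simp add: tv_sub)
next
  case (rgt u v)
  have c: "mm {normv (tv P Q u), normv (tv P Q v), normv (vsub (tv P Q u) (tv P Q v))} =
           mm {normv (tv P Q u), normv (tv P Q v), normv (vadd (tv P Q u) (tv P Q v))}"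
    using mm_const[OF node_det[OF d rgt.hyps]] .
  have "{normv (tv P Q (vadd u v)), normv (tv P Q v), normv (tv P Q (vsub (vadd u v) v))}
      = {normv (tv P Q u), normv (tv P Q v), normv (vadd (tv P Q u) (tv P Q v))}"
    by (auto simp: tv_add)
  then show ?case using c rgt.IH by (simp add: tv_sub)
qed

end


context stp
begin

lemma comp_id: assumes d: "\<bar>det x y\<bar> = 1" and A: "A \<subseteq> {1..N}" "A \<noteq> {}"
  shows "ev (vsub x y) * lamv (vadd x y) A + ev (vadd x y) * lamv (vsub x y) A =
    2 * ev x * lamv x A + 2 * ev y * lamv y A + (mid (lamv x) (lamv x) A + mid (lamv y) (lamv y) A
     + gmul N (gmul N (lamv x) (lamv y)) (gscale (spin_sign al be (vsub x y)) (mm {normv x, normv y, normv (vsub x y)})) A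
     - mid (lamv (vsub x y)) (lamv (vadd x y)) A)"
proof -
  have e: "gmul N (lamv (vsub x y)) (lamv (vadd x y)) A =
    gmul N (lamv x) (lamv x) A + gmul N (lamv y) (lamv y) A +
      gmul N (gmul N (lamv x) (lamv y))
         (gscale (spin_sign al be (vsub x y)) (mm {normv x, normv y, normv (vsub x y)})) A"
    using fun_cong[OF ptolv[OF d], of A] by simp
  show ?thesis using e unfolding gmul_split[OF A] ev_def by (simp add: algebra_simps)
qed

definition LDv :: "nat \<Rightarrow> real \<Rightarrow> real \<Rightarrow> bool" where
  "LDv k d M \<longleftrightarrow> (\<forall>z B. okv z \<longrightarrow> B \<subseteq> {1..N} \<longrightarrow> card B \<le> k \<longrightarrow> \<bar>lamv z B\<bar> \<le> M * ev z powr (1+d))"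

lemma LDv_D: "LDv k d M \<Longrightarrow> okv z \<Longrightarrow> B \<subseteq> {1..N} \<Longrightarrow> card B \<le> k \<Longrightarrow>
   \<bar>lamv z B\<bar> \<le> M * ev z powr (1+d)"
  unfolding LDv_def by blast

lemma sum_le_card: fixes f :: "'a \<Rightarrow> real"
  assumes "finite S" "\<And>i. i \<in> S \<Longrightarrow> f i \<le> K" "card S \<le> n" "K \<ge> 0"
  shows "sum f S \<le> of_nat n * K"
proof -
  have "sum f S \<le> of_nat (card S) * K" using sum_bounded_above[of S f K] assms(2) by simp
  also have "\<dots> \<le> of_nat n * K" using assms(3,4) by (intro mult_right_mono) auto
  finally show ?thesis .
qed

lemma prod_bound: fixes a b A B :: real
  assumes "\<bar>a\<bar> \<le> A" "\<bar>b\<bar> \<le> B" shows "\<bar>a\<bar> * \<bar>b\<bar> \<le> A * B"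
  using assms by (meson abs_ge_zero mult_mono order_trans)

lemma mid_LD: assumes L: "LDv k d M" and o: "okv p" "okv q" and A: "A \<subseteq> {1..N}" "card A = Suc k"
  shows "\<bar>mid (lamv p) (lamv q) A\<bar> \<le> 2^(Suc k) * ((M * ev p powr (1+d)) * (M * ev q powr (1+d)))"
proof -
  have finA: "finite A" using A(1) finite_subset by blast
  let ?K = "(M * ev p powr (1+d)) * (M * ev q powr (1+d))"
  have K0: "?K \<ge> 0"
  proof -
    have "\<bar>lamv p {}\<bar> \<le> M * ev p powr (1+d)" "\<bar>lamv q {}\<bar> \<le> M * ev q powr (1+d)"
      using LDv_D[OF L o(1), of "{}"] LDv_D[OF L o(2), of "{}"] by auto
    then show ?thesis by (meson abs_ge_zero order_trans mult_nonneg_nonneg)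
  qed
  have "\<bar>mid (lamv p) (lamv q) A\<bar> \<le> (\<Sum>B\<in>Pow A - {{}, A}. \<bar>lamv p B\<bar> * \<bar>lamv q (A - B)\<bar>)"
    by (rule mid_bound)
  also have "\<dots> \<le> of_nat (2^(Suc k)) * ?K"
  proof (rule sum_le_card)
    show "finite (Pow A - {{}, A})" using finA by simp
    have "card (Pow A - {{}, A}) \<le> card (Pow A)" by (rule card_mono) (use finA in auto)
    then show "card (Pow A - {{}, A}) \<le> 2^(Suc k)" using finA A(2) by (simp add: card_Pow)
    show "?K \<ge> 0" using K0 .
    fix B assume B: "B \<in> Pow A - {{}, A}"
    have BA: "B \<subset> A" using B by auto
    have c1: "card B \<le> k" using psubset_card_mono[OF finA BA] A(2) by simp
    have "A - B \<subset> A" using B by auto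
    then have "card (A - B) < card A" by (rule psubset_card_mono[OF finA])
    then have c2: "card (A - B) \<le> k" using A(2) by simp
    have "\<bar>lamv p B\<bar> \<le> M * ev p powr (1+d)" using LDv_D[OF L o(1) _ c1] BA A(1) by auto
    moreover have "\<bar>lamv q (A - B)\<bar> \<le> M * ev q powr (1+d)" using LDv_D[OF L o(2) _ c2] A(1) by auto
    ultimately show "\<bar>lamv p B\<bar> * \<bar>lamv q (A - B)\<bar> \<le> ?K" by (rule prod_bound)
  qed
  finally show ?thesis by simp
qed

lemma gmul_LD: assumes L: "LDv k d M" and o: "okv p" "okv q" and C: "C \<subseteq> {1..N}" "card C \<le> k"
  shows "\<bar>gmul N (lamv p) (lamv q) C\<bar> \<le> 2^k * ((M * ev p powr (1+d)) * (M * ev q powr (1+d)))"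
proof -
  have finC: "finite C" using C(1) finite_subset by blast
  let ?K = "(M * ev p powr (1+d)) * (M * ev q powr (1+d))"
  have K0: "?K \<ge> 0"
  proof -
    have "\<bar>lamv p {}\<bar> \<le> M * ev p powr (1+d)" "\<bar>lamv q {}\<bar> \<le> M * ev q powr (1+d)"
      using LDv_D[OF L o(1), of "{}"] LDv_D[OF L o(2), of "{}"] by auto
    then show ?thesis by (meson abs_ge_zero order_trans mult_nonneg_nonneg)
  qed
  have "\<bar>gmul N (lamv p) (lamv q) C\<bar> \<le> (\<Sum>B\<in>Pow C. \<bar>lamv p B\<bar> * \<bar>lamv q (C - B)\<bar>)"
    by (rule gmul_bound)
  also have "\<dots> \<le> of_nat (2^k) * ?K"
  proof (rule sum_le_card)
    show "finite (Pow C)" using finC by simp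
    show "card (Pow C) \<le> 2^k" using finC C(2) by (simp add: card_Pow)
    show "?K \<ge> 0" using K0 .
    fix B assume B: "B \<in> Pow C"
    have "card B \<le> card C" by (rule card_mono[OF finC]) (use B in auto)
    then have c1: "card B \<le> k" using C(2) by simp
    have "card (C - B) \<le> card C" by (rule card_mono[OF finC]) auto
    then have c2: "card (C - B) \<le> k" using C(2) by simp
    have "\<bar>lamv p B\<bar> \<le> M * ev p powr (1+d)" using LDv_D[OF L o(1) _ c1] B C(1) by auto
    moreover have "\<bar>lamv q (C - B)\<bar> \<le> M * ev q powr (1+d)" using LDv_D[OF L o(2) _ c2] C(1) by auto
    ultimately show "\<bar>lamv p B\<bar> * \<bar>lamv q (C - B)\<bar> \<le> ?K" by (rule prod_bound)
  qed
  finally show ?thesis by simp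
qed

lemma WT_LD: assumes L: "LDv k d M" and o: "okv p" "okv q" and A: "A \<subseteq> {1..N}" "card A = Suc k"
    and W0: "W {} = 0" and Wb: "\<And>D. \<bar>W D\<bar> \<le> Wb"
  shows "\<bar>gmul N (gmul N (lamv p) (lamv q)) W A\<bar> \<le>
     2^(Suc k) * (2^k * ((M * ev p powr (1+d)) * (M * ev q powr (1+d))) * Wb)"
proof -
  have finA: "finite A" using A(1) finite_subset by blast
  let ?K = "2^k * ((M * ev p powr (1+d)) * (M * ev q powr (1+d)))"
  have K0: "?K \<ge> 0"
  proof -
    have "\<bar>lamv p {}\<bar> \<le> M * ev p powr (1+d)" "\<bar>lamv q {}\<bar> \<le> M * ev q powr (1+d)"
      using LDv_D[OF L o(1), of "{}"] LDv_D[OF L o(2), of "{}"] by auto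
    then show ?thesis by (meson abs_ge_zero order_trans mult_nonneg_nonneg zero_le_power zero_le_numeral)
  qed
  have Wb0: "Wb \<ge> 0" using Wb[of "{}"] by simp
  have "\<bar>gmul N (gmul N (lamv p) (lamv q)) W A\<bar> \<le> (\<Sum>C\<in>Pow A. \<bar>gmul N (lamv p) (lamv q) C\<bar> * \<bar>W (A - C)\<bar>)"
    by (rule gmul_bound)
  also have "\<dots> \<le> of_nat (2^(Suc k)) * (?K * Wb)"
  proof (rule sum_le_card)
    show "finite (Pow A)" using finA by simp
    show "card (Pow A) \<le> 2^(Suc k)" using finA A(2) by (simp add: card_Pow)
    show "?K * Wb \<ge> 0" using K0 Wb0 by simp
    fix C assume C: "C \<in> Pow A"
    show "\<bar>gmul N (lamv p) (lamv q) C\<bar> * \<bar>W (A - C)\<bar> \<le> ?K * Wb"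
    proof (cases "C = A")
      case True then show ?thesis using W0 K0 Wb0 by simp
    next
      case False
      then have CA: "C \<subset> A" using C by auto
      have c1: "card C \<le> k" using psubset_card_mono[OF finA CA] A(2) by simp
      have "\<bar>gmul N (lamv p) (lamv q) C\<bar> \<le> ?K" using gmul_LD[OF L o _ c1] C A(1) by auto
      then show ?thesis using Wb[of "A - C"] by (rule prod_bound)
    qed
  qed
  finally show ?thesis by simp
qed

end


lemma powr_1d: fixes e d :: real assumes "e > 0" shows "e powr (1 + d) = e * e powr d"
  using assms by (simp add: powr_add)

lemma sq_bound: fixes a D b t M :: real
  assumes "a \<le> D" "0 \<le> a" "0 \<le> b" "b \<le> t" shows "M\<^sup>2 * a * b\<^sup>2 \<le> M\<^sup>2 * D * t\<^sup>2"
proof -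
  have "b\<^sup>2 \<le> t\<^sup>2" using assms(3,4) by (intro power_mono) auto
  then have "a * b\<^sup>2 \<le> D * t\<^sup>2" using assms(1,2) by (intro mult_mono) auto
  then show ?thesis by (simp add: mult.assoc mult_left_mono)
qed

lemma fb_real: fixes ex ey eR eS M d K1 K2 m1 m2 m3 m4 :: real
  assumes pos: "ex > 0" "ey > 0" "eR > 0" "eS > 0" and p: "eR * eS = ex\<^sup>2 + ey\<^sup>2"
    and le: "ex \<le> eS" "ey \<le> eS" "eR \<le> eS" and d: "d \<ge> 0" and K: "K1 \<ge> 0" "K2 \<ge> 0"
    and b1: "\<bar>m1\<bar> \<le> K1 * ((M * ex powr (1+d)) * (M * ex powr (1+d)))"
    and b2: "\<bar>m2\<bar> \<le> K1 * ((M * ey powr (1+d)) * (M * ey powr (1+d)))"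
    and b3: "\<bar>m3\<bar> \<le> K1 * ((M * eR powr (1+d)) * (M * eS powr (1+d)))"
    and b4: "\<bar>m4\<bar> \<le> K2 * ((M * ex powr (1+d)) * (M * ey powr (1+d)))"
  shows "\<bar>(m1 + m2 + m4 - m3) / (ex\<^sup>2 + ey\<^sup>2)\<bar> \<le> (3 * K1 + K2) * M\<^sup>2 * eS powr (2 * d)"
proof -
  define D where "D = ex\<^sup>2 + ey\<^sup>2"
  define t where "t = eS powr d"
  have Dp: "D > 0" unfolding D_def using pos by (intro add_pos_pos) auto
  have t0: "t \<ge> 0" unfolding t_def by simp
  have tx: "ex powr d \<le> t" "ey powr d \<le> t" "eR powr d \<le> t" unfolding t_def
    using le pos d by (auto intro: powr_mono2)
  have n: "ex powr d \<ge> 0" "ey powr d \<ge> 0" "eR powr d \<ge> 0" by auto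
  have M2: "M\<^sup>2 \<ge> 0" by simp
  have t1: "(M * ex powr (1+d)) * (M * ex powr (1+d)) \<le> M\<^sup>2 * D * t\<^sup>2"
  proof -
    have "(M * ex powr (1+d)) * (M * ex powr (1+d)) = M\<^sup>2 * ex\<^sup>2 * (ex powr d)\<^sup>2"
      unfolding powr_1d[OF pos(1)] by (simp add: power2_eq_square algebra_simps)
    also have "\<dots> \<le> M\<^sup>2 * D * t\<^sup>2"
      using sq_bound[of "ex\<^sup>2" D "ex powr d" t M] tx(1) n(1) unfolding D_def by simp
    finally show ?thesis .
  qed
  have t2: "(M * ey powr (1+d)) * (M * ey powr (1+d)) \<le> M\<^sup>2 * D * t\<^sup>2"
  proof -
    have "(M * ey powr (1+d)) * (M * ey powr (1+d)) = M\<^sup>2 * ey\<^sup>2 * (ey powr d)\<^sup>2"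
      unfolding powr_1d[OF pos(2)] by (simp add: power2_eq_square algebra_simps)
    also have "\<dots> \<le> M\<^sup>2 * D * t\<^sup>2"
      using sq_bound[of "ey\<^sup>2" D "ey powr d" t M] tx(2) n(2) unfolding D_def by simp
    finally show ?thesis .
  qed
  have t3: "(M * eR powr (1+d)) * (M * eS powr (1+d)) \<le> M\<^sup>2 * D * t\<^sup>2"
  proof -
    have "(M * eR powr (1+d)) * (M * eS powr (1+d)) = M\<^sup>2 * (eR * eS) * (eR powr d * t)"
      unfolding powr_1d[OF pos(3)] powr_1d[OF pos(4)] t_def by (simp add: power2_eq_square algebra_simps)
    also have "\<dots> \<le> M\<^sup>2 * D * (t * t)"
      unfolding p D_def[symmetric] using tx(3) n(3) M2 Dp t0 by (intro mult_left_mono mult_right_mono) auto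
    finally show ?thesis by (simp add: power2_eq_square)
  qed
  have t4: "(M * ex powr (1+d)) * (M * ey powr (1+d)) \<le> M\<^sup>2 * D * t\<^sup>2"
  proof -
    have "(M * ex powr (1+d)) * (M * ey powr (1+d)) = M\<^sup>2 * (ex * ey) * (ex powr d * ey powr d)"
      unfolding powr_1d[OF pos(1)] powr_1d[OF pos(2)] by (simp add: power2_eq_square algebra_simps)
    also have "\<dots> \<le> M\<^sup>2 * D * (t * t)"
    proof -
      have "2 * ex * ey \<le> D" unfolding D_def using sum_squares_bound[of ex ey] by simp
      moreover have "ex * ey > 0" using pos by simp
      ultimately have "ex * ey \<le> D" by linarith
      moreover have "ex powr d * ey powr d \<le> t * t" using tx n t0 by (intro mult_mono) auto
      ultimately have "(ex * ey) * (ex powr d * ey powr d) \<le> D * (t * t)"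
        by (rule mult_mono) (use Dp n in auto)
      then show ?thesis using M2 by (simp add: mult.assoc mult_left_mono)
    qed
    finally show ?thesis by (simp add: power2_eq_square)
  qed
  have "\<bar>m1 + m2 + m4 - m3\<bar> \<le> \<bar>m1\<bar> + \<bar>m2\<bar> + \<bar>m4\<bar> + \<bar>m3\<bar>" by linarith
  also have "\<dots> \<le> K1 * (M\<^sup>2 * D * t\<^sup>2) + K1 * (M\<^sup>2 * D * t\<^sup>2) + K2 * (M\<^sup>2 * D * t\<^sup>2) + K1 * (M\<^sup>2 * D * t\<^sup>2)"
  proof -
    have "K1 * ((M * ex powr (1+d)) * (M * ex powr (1+d))) \<le> K1 * (M\<^sup>2 * D * t\<^sup>2)"
      using t1 K(1) by (rule mult_left_mono)
    moreover have "K1 * ((M * ey powr (1+d)) * (M * ey powr (1+d))) \<le> K1 * (M\<^sup>2 * D * t\<^sup>2)"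
      using t2 K(1) by (rule mult_left_mono)
    moreover have "K1 * ((M * eR powr (1+d)) * (M * eS powr (1+d))) \<le> K1 * (M\<^sup>2 * D * t\<^sup>2)"
      using t3 K(1) by (rule mult_left_mono)
    moreover have "K2 * ((M * ex powr (1+d)) * (M * ey powr (1+d))) \<le> K2 * (M\<^sup>2 * D * t\<^sup>2)"
      using t4 K(2) by (rule mult_left_mono)
    ultimately show ?thesis using b1 b2 b3 b4 by linarith
  qed
  also have "\<dots> = D * ((3 * K1 + K2) * M\<^sup>2 * t\<^sup>2)" by (simp add: algebra_simps)
  finally have "\<bar>m1 + m2 + m4 - m3\<bar> / D \<le> (3 * K1 + K2) * M\<^sup>2 * t\<^sup>2"
    using Dp by (simp add: divide_le_eq mult.commute)
  moreover have "t\<^sup>2 = eS powr (2 * d)" unfolding t_def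
    using powr_power[of eS d 2] pos by (simp add: mult.commute)
  ultimately show ?thesis unfolding D_def by (simp add: abs_divide)
qed


lemma ftr_alg: fixes eR eS ex ey lR lS lx ly F :: real
  assumes pos: "eR > 0" "eS > 0" "ex > 0" "ey > 0" and p: "eS * eR = ex\<^sup>2 + ey\<^sup>2"
    and c: "eR * lS + eS * lR = 2 * ex * lx + 2 * ey * ly + F"
  shows "lR / eR + lS / eS - (2 * ex\<^sup>2 / (ex\<^sup>2 + ey\<^sup>2) * (lx / ex) + 2 * ey\<^sup>2 / (ex\<^sup>2 + ey\<^sup>2) * (ly / ey))
     = F / (ex\<^sup>2 + ey\<^sup>2)"
proof -
  define D where "D = ex\<^sup>2 + ey\<^sup>2"
  have Dp: "D > 0" unfolding D_def using pos by (intro add_pos_pos) auto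
  have a: "lR / eR + lS / eS = (eR * lS + eS * lR) / D"
    unfolding D_def p[symmetric] using pos by (simp add: field_simps)
  have b: "2 * ex\<^sup>2 / D * (lx / ex) = 2 * ex * lx / D" using pos by (simp add: power2_eq_square field_simps)
  have b2: "2 * ey\<^sup>2 / D * (ly / ey) = 2 * ey * ly / D" using pos by (simp add: power2_eq_square field_simps)
  show ?thesis unfolding D_def[symmetric] a b b2 c using Dp by (simp add: field_simps)
qed

context stp
begin

definition Utr :: "int\<times>int \<Rightarrow> int\<times>int \<Rightarrow> nat set \<Rightarrow> int\<times>int \<Rightarrow> real" where
  "Utr P Q A x = (if okv (tv P Q x) then lamv (tv P Q x) A / ev (tv P Q x) else 0)"

definition ftr :: "int\<times>int \<Rightarrow> int\<times>int \<Rightarrow> nat set \<Rightarrow> int\<times>int \<Rightarrow> int\<times>int \<Rightarrow> real" where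
  "ftr P Q A u v = Utr P Q A (vsub u v) + Utr P Q A (vadd u v) -
     (2*(Etr P Q u)\<^sup>2/((Etr P Q u)\<^sup>2+(Etr P Q v)\<^sup>2) * Utr P Q A u +
      2*(Etr P Q v)\<^sup>2/((Etr P Q u)\<^sup>2+(Etr P Q v)\<^sup>2) * Utr P Q A v)"

lemma tree_step:
  assumes d: "\<bar>det P Q\<bar> = 1" and asc: "ev (vsub P Q) \<le> ev (vadd P Q)" and L: "LDv k dd M"
    and dd: "dd \<ge> 0" and A: "A \<subseteq> {1..N}" "card A = Suc k"
    and Wb: "\<And>D. \<bar>mm {normv P, normv Q, normv (vsub P Q)} D\<bar> \<le> Wb" and eps: "\<epsilon> > 0"
  shows "\<exists>M'. \<forall>u v. sbn u v \<longrightarrow>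
     \<bar>lamv (tv P Q (vadd u v)) A\<bar> \<le> M' * ev (tv P Q (vadd u v)) powr (1 + (2*dd + \<epsilon>))"
proof -
  interpret r0: rl0 "Etr P Q" by (rule tree_rl0[OF d asc])
  have Ane: "A \<noteq> {}" using A(2) by auto
  have Wb0: "Wb \<ge> 0" using Wb[of "{}"] by simp
  define K1 where "K1 = (2::real)^(Suc k)"
  define K2 where "K2 = (2::real)^(Suc k) * (2^k * Wb)"
  define C where "C = (3*K1 + K2) * M\<^sup>2"
  have K: "K1 \<ge> 0" "K2 \<ge> 0" unfolding K1_def K2_def using Wb0 by auto
  have C0: "C \<ge> 0" unfolding C_def using K by simp
  have fb: "\<bar>ftr P Q A u v\<bar> \<le> C * Etr P Q (vadd u v) powr (2*dd)" if n: "sbn u v" for u v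
  proof -
    let ?x = "tv P Q u" and ?y = "tv P Q v"
    have dxy: "\<bar>det ?x ?y\<bar> = 1" using node_det[OF d n] .
    note ok = tri_facts(4-7)[OF dxy]
    have ex: "ev ?x > 0" "ev ?y > 0" "ev (vsub ?x ?y) > 0" "ev (vadd ?x ?y) > 0" using ev_pos ok by auto
    note En = Etr_node[OF d n]
    have le: "ev ?x \<le> ev (vadd ?x ?y)" "ev ?y \<le> ev (vadd ?x ?y)" "ev (vsub ?x ?y) \<le> ev (vadd ?x ?y)"
      using r0.big(1,2)[OF n] r0.asc[OF n] unfolding En by (simp_all add: tv_add tv_sub)
    have bp: "ev (vadd ?x ?y) * ev (vsub ?x ?y) = (ev ?x)\<^sup>2 + (ev ?y)\<^sup>2" using body_ptol[OF dxy] .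
    let ?W = "gscale (spin_sign al be (vsub ?x ?y)) (mm {normv ?x, normv ?y, normv (vsub ?x ?y)})"
    have mmeq: "mm {normv ?x, normv ?y, normv (vsub ?x ?y)} = mm {normv P, normv Q, normv (vsub P Q)}"
      using mm_tree[OF d n] by (simp add: tv_sub)
    have W0: "?W {} = 0" using mm_body[OF tri_facts(2)[OF dxy]] by simp
    have WB: "\<bar>?W D\<bar> \<le> Wb" for D using Wb[of D] mmeq by (simp add: abs_mult)
    let ?F = "mid (lamv ?x) (lamv ?x) A + mid (lamv ?y) (lamv ?y) A
     + gmul N (gmul N (lamv ?x) (lamv ?y)) ?W A - mid (lamv (vsub ?x ?y)) (lamv (vadd ?x ?y)) A"
    have ci: "ev (vsub ?x ?y) * lamv (vadd ?x ?y) A + ev (vadd ?x ?y) * lamv (vsub ?x ?y) A =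
       2 * ev ?x * lamv ?x A + 2 * ev ?y * lamv ?y A + ?F" using comp_id[OF dxy A(1) Ane] .
    have fe: "ftr P Q A u v = ?F / ((ev ?x)\<^sup>2 + (ev ?y)\<^sup>2)"
    proof -
      have U: "Utr P Q A u = lamv ?x A / ev ?x" "Utr P Q A v = lamv ?y A / ev ?y"
        "Utr P Q A (vsub u v) = lamv (vsub ?x ?y) A / ev (vsub ?x ?y)"
        "Utr P Q A (vadd u v) = lamv (vadd ?x ?y) A / ev (vadd ?x ?y)"
        unfolding Utr_def using ok by (simp_all add: tv_add tv_sub)
      show ?thesis unfolding ftr_def U En using ftr_alg[OF ex(3,4,1,2) bp ci] by simp
    qed
    have m1: "\<bar>mid (lamv ?x) (lamv ?x) A\<bar> \<le> K1 * ((M * ev ?x powr (1+dd)) * (M * ev ?x powr (1+dd)))"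
      unfolding K1_def using mid_LD[OF L ok(1) ok(1) A] .
    have m2: "\<bar>mid (lamv ?y) (lamv ?y) A\<bar> \<le> K1 * ((M * ev ?y powr (1+dd)) * (M * ev ?y powr (1+dd)))"
      unfolding K1_def using mid_LD[OF L ok(2) ok(2) A] .
    have m3: "\<bar>mid (lamv (vsub ?x ?y)) (lamv (vadd ?x ?y)) A\<bar> \<le>
       K1 * ((M * ev (vsub ?x ?y) powr (1+dd)) * (M * ev (vadd ?x ?y) powr (1+dd)))"
      unfolding K1_def using mid_LD[OF L ok(4) ok(3) A] .
    have m4: "\<bar>gmul N (gmul N (lamv ?x) (lamv ?y)) ?W A\<bar> \<le> K2 * ((M * ev ?x powr (1+dd)) * (M * ev ?y powr (1+dd)))"
      using WT_LD[where W = "?W" and Wb = Wb, OF L ok(1) ok(2) A W0 WB] unfolding K2_def by (simp add: algebra_simps)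
    have "\<bar>ftr P Q A u v\<bar> \<le> (3 * K1 + K2) * M\<^sup>2 * ev (vadd ?x ?y) powr (2 * dd)"
      unfolding fe using fb_real[OF ex(1,2,3,4) _ le dd K m1 m2 m3 m4] bp by (simp add: mult.commute)
    then show ?thesis unfolding C_def En tv_add by simp
  qed
  interpret r: rl "Etr P Q" "Utr P Q A" "ftr P Q A" C "2*dd"
  proof (rule rl.intro[OF tree_rl0[OF d asc]], rule rl_axioms.intro)
    show "Utr P Q A (vneg x) = Utr P Q A x" for x unfolding Utr_def tv_neg by simp
    show "Utr P Q A (vsub u v) + Utr P Q A (vadd u v) =
        2*(Etr P Q u)\<^sup>2/((Etr P Q u)\<^sup>2+(Etr P Q v)\<^sup>2) * Utr P Q A u +
        2*(Etr P Q v)\<^sup>2/((Etr P Q u)\<^sup>2+(Etr P Q v)\<^sup>2) * Utr P Q A v + ftr P Q A u v" for u v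
      unfolding ftr_def by simp
    show "sbn u v \<Longrightarrow> \<bar>ftr P Q A u v\<bar> \<le> C * Etr P Q (vadd u v) powr (2*dd)" for u v using fb by blast
    show "C \<ge> 0" using C0 .
    show "2*dd \<ge> 0" using dd by simp
  qed
  obtain M' where M': "\<forall>u v. sbn u v \<longrightarrow> \<bar>Utr P Q A (vadd u v)\<bar> \<le> M' * Etr P Q (vadd u v) powr (2*dd + \<epsilon>)"
    using r.RL_main[OF eps] by blast
  have "\<bar>lamv (tv P Q (vadd u v)) A\<bar> \<le> M' * ev (tv P Q (vadd u v)) powr (1 + (2*dd + \<epsilon>))"
    if n: "sbn u v" for u v
  proof -
    let ?s = "tv P Q (vadd u v)"
    have ok: "okv ?s" using okv_node(3)[OF d n] .
    have e: "ev ?s > 0" using ev_pos[OF ok] .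
    have "\<bar>Utr P Q A (vadd u v)\<bar> \<le> M' * Etr P Q (vadd u v) powr (2*dd + \<epsilon>)" using M' n by blast
    then have "\<bar>lamv ?s A / ev ?s\<bar> \<le> M' * ev ?s powr (2*dd + \<epsilon>)"
      using Etr_node(3)[OF d n] ok unfolding Utr_def by simp
    then have "\<bar>lamv ?s A\<bar> \<le> M' * ev ?s powr (2*dd + \<epsilon>) * ev ?s" using e by (simp add: abs_divide divide_le_eq)
    also have "\<dots> = M' * ev ?s powr (1 + (2*dd + \<epsilon>))" using e by (simp add: powr_add)
    finally show ?thesis .
  qed
  then show ?thesis by blast
qed

end


context stp
begin

lemma red_asc: assumes g: "good p" and H: "Ht p = h" and r: "red h p"
  shows "tr3 p \<le> ev (vsub (fst p) (snd p))"
proof -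
  note ps = tr_pos[OF g]
  have hp: "h > 0" unfolding H[symmetric] Ht_def using Hv_pos ps by simp
  have "(h * tr1 p) * (h * tr2 p) \<ge> 2 * (h * tr3 p)" using r unfolding red_def redx_def by simp
  then have "h * (h * tr1 p * tr2 p) \<ge> h * (2 * tr3 p)" by (simp add: algebra_simps)
  then have "h * tr1 p * tr2 p \<ge> 2 * tr3 p" using hp by simp
  then show ?thesis using Ht_mv(2)[OF g] H by simp
qed

lemma good_base: "good ((1,0),(0,1))" unfolding good_def by (simp add: det_def)

lemma red_tree_asc: assumes g: "good (a,b)" and H: "Ht (a,b) = h" and r: "red h (a,b)"
  shows "ev (vsub a (vadd a b)) \<le> ev (vadd a (vadd a b))"
    "ev (vsub (vadd a b) b) \<le> ev (vadd (vadd a b) b)"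
    "ev (vsub b (vneg a)) \<le> ev (vadd b (vneg a))"
proof -
  have a3: "tr3 (a,b) \<le> ev (vsub a b)" using red_asc[OF g H r] by simp
  have g1: "good (rot (a,b))" using good_rot[OF g] .
  have H1: "Ht (rot (a,b)) = h" using Ht_rot H by simp
  have r1: "red h (rot (a,b))" using red_rot r by simp
  have a1: "tr3 (rot (a,b)) \<le> ev (vsub (fst (rot (a,b))) (snd (rot (a,b))))" using red_asc[OF g1 H1 r1] .
  have g2: "good (rot (rot (a,b)))" using good_rot[OF g1] .
  have H2: "Ht (rot (rot (a,b))) = h" using Ht_rot H1 by simp
  have r2: "red h (rot (rot (a,b)))" using red_rot r1 by simp
  have a2: "tr3 (rot (rot (a,b))) \<le> ev (vsub (fst (rot (rot (a,b)))) (snd (rot (rot (a,b)))))"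
    using red_asc[OF g2 H2 r2] .
  have v1: "vsub b (vneg (vadd a b)) = vadd (vadd a b) b" by (simp add: vsub_def vadd_def vneg_def)
  have v2: "vsub (vneg (vadd a b)) (vneg (vadd b (vneg (vadd a b)))) = vneg (vadd a (vadd a b))"
    by (simp add: vsub_def vadd_def vneg_def)
  have v3: "vadd b (vneg (vadd a b)) = vneg a" by (simp add: vadd_def vneg_def)
  have "tr3 (rot (rot (a,b))) = ev b" unfolding tr_rot by (simp add: tr2_def)
  then show "ev (vsub a (vadd a b)) \<le> ev (vadd a (vadd a b))" using a2 v2 by (simp add: rot_def)
  have "tr3 (rot (a,b)) = ev a" unfolding tr_rot by (simp add: tr1_def)
  then show "ev (vsub (vadd a b) b) \<le> ev (vadd (vadd a b) b)" using a1 v1 by (simp add: rot_def)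
  have "vsub b (vneg a) = vadd a b" "vadd b (vneg a) = vneg (vsub a b)"
    by (simp_all add: vsub_def vadd_def vneg_def)
  then show "ev (vsub b (vneg a)) \<le> ev (vadd b (vneg a))" using a3 by (simp add: tr3_def)
qed


definition inT :: "int\<times>int \<Rightarrow> int\<times>int \<Rightarrow> int\<times>int \<Rightarrow> bool" where
  "inT P Q g \<longleftrightarrow> (\<exists>u v. sbn u v \<and> g = normv (tv P Q (vadd u v)))"

lemma decomp: assumes d: "\<bar>det a b\<bar> = 1"
  shows "\<exists>\<alpha> \<beta>. g = tv a b (\<alpha>, \<beta>) \<and> (coprime (fst g) (snd g) \<longrightarrow> coprime \<alpha> \<beta>)"
proof -
  define \<delta> where "\<delta> = det a b"
  have "\<delta> = 1 \<or> \<delta> = -1" using d unfolding \<delta>_def by auto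
  then have dd: "\<delta> * \<delta> = 1" by auto
  define \<alpha> where "\<alpha> = det g b * \<delta>"
  define \<beta> where "\<beta> = det a g * \<delta>"
  have e: "g = tv a b (\<alpha>, \<beta>)"
  proof -
    have "fst (tv a b (\<alpha>, \<beta>)) = fst g * (\<delta> * \<delta>)" "snd (tv a b (\<alpha>, \<beta>)) = snd g * (\<delta> * \<delta>)"
      unfolding tv_def \<alpha>_def \<beta>_def \<delta>_def det_def by (simp_all add: algebra_simps)
    then show ?thesis using dd by (simp add: prod_eq_iff)
  qed
  have c: "coprime \<alpha> \<beta>" if cg: "coprime (fst g) (snd g)"
  proof (rule coprimeI)
    fix c assume c: "c dvd \<alpha>" "c dvd \<beta>"
    have f1: "fst g = \<alpha> * fst a + \<beta> * fst b" "snd g = \<alpha> * snd a + \<beta> * snd b"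
      using e by (simp_all add: tv_def)
    have "c dvd fst g" unfolding f1 by (rule dvd_add[OF dvd_mult2[OF c(1)] dvd_mult2[OF c(2)]])
    moreover have "c dvd snd g" unfolding f1 by (rule dvd_add[OF dvd_mult2[OF c(1)] dvd_mult2[OF c(2)]])
    ultimately show "is_unit c" using cg coprime_common_divisor by blast
  qed
  show ?thesis using e c by blast
qed

lemma tv_neg_coef: "tv P Q (- x, - y) = vneg (tv P Q (x, y))" by (simp add: tv_def vneg_def)

lemma cover_pos: assumes "\<alpha> \<ge> 1" "\<beta> \<ge> 1" "coprime \<alpha> \<beta>"
  shows "normv (tv a b (\<alpha>, \<beta>)) = normv (vadd a b) \<or> inT a (vadd a b) (normv (tv a b (\<alpha>, \<beta>)))
     \<or> inT (vadd a b) b (normv (tv a b (\<alpha>, \<beta>)))"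
proof -
  consider "\<alpha> = \<beta>" | "\<alpha> > \<beta>" | "\<alpha> < \<beta>" by linarith
  then show ?thesis
  proof cases
    case 1
    then have "is_unit \<alpha>" using assms(3) by simp
    then have "\<alpha> = 1" using assms(1) by auto
    then show ?thesis using 1 by (simp add: tv_def vadd_def)
  next
    case 2
    obtain u v where uv: "sbn u v" "vadd u v = (\<alpha> - \<beta>, \<beta>)"
      using sbn_cover[of "\<alpha> - \<beta>" \<beta>] assms 2 cop_sub1 by auto
    have "tv a (vadd a b) (vadd u v) = tv a b (\<alpha>, \<beta>)" unfolding uv(2) by (simp add: tv_def vadd_def algebra_simps)
    then show ?thesis using uv(1) unfolding inT_def by metis
  next
    case 3
    obtain u v where uv: "sbn u v" "vadd u v = (\<alpha>, \<beta> - \<alpha>)"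
      using sbn_cover[of \<alpha> "\<beta> - \<alpha>"] assms 3 cop_sub2 by auto
    have "tv (vadd a b) b (vadd u v) = tv a b (\<alpha>, \<beta>)" unfolding uv(2) by (simp add: tv_def vadd_def algebra_simps)
    then show ?thesis using uv(1) unfolding inT_def by metis
  qed
qed

lemma cover_mixed: assumes "\<alpha> \<ge> 1" "\<beta> \<ge> 1" "coprime \<alpha> \<beta>"
  shows "inT b (vneg a) (normv (tv a b (- \<alpha>, \<beta>)))"
proof -
  obtain u v where uv: "sbn u v" "vadd u v = (\<beta>, \<alpha>)"
    using sbn_cover[of \<beta> \<alpha>] assms by (auto simp: coprime_commute)
  have "tv b (vneg a) (vadd u v) = tv a b (- \<alpha>, \<beta>)" unfolding uv(2) by (simp add: tv_def vadd_def vneg_def algebra_simps)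
  then show ?thesis using uv(1) unfolding inT_def by metis
qed

lemma cover: assumes d: "\<bar>det a b\<bar> = 1" and g: "is_arc g"
  shows "g = normv a \<or> g = normv b \<or> g = normv (vadd a b) \<or> inT a (vadd a b) g \<or>
     inT (vadd a b) b g \<or> inT b (vneg a) g"
proof -
  have cg: "coprime (fst g) (snd g)" using g unfolding is_arc_def by simp
  have gn: "normv g = g" using normv_arc[OF g] .
  obtain \<alpha> \<beta> where e: "g = tv a b (\<alpha>, \<beta>)" and c: "coprime \<alpha> \<beta>" using decomp[OF d, of g] cg by blast
  consider "\<alpha> = 0" | "\<beta> = 0" | "\<alpha> > 0" "\<beta> > 0" | "\<alpha> < 0" "\<beta> < 0" | "\<alpha> < 0" "\<beta> > 0" | "\<alpha> > 0" "\<beta> < 0"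
    by linarith
  then show ?thesis
  proof cases
    case 1
    then have "is_unit \<beta>" using c by simp
    then have "\<beta> = 1 \<or> \<beta> = -1" by auto
    then have "g = b \<or> g = vneg b" using e 1 by (auto simp: tv_def vneg_def)
    then have "g = normv b" using gn by (metis normv_vneg)
    then show ?thesis by blast
  next
    case 2
    then have "is_unit \<alpha>" using c by simp
    then have "\<alpha> = 1 \<or> \<alpha> = -1" by auto
    then have "g = a \<or> g = vneg a" using e 2 by (auto simp: tv_def vneg_def)
    then have "g = normv a" using gn by (metis normv_vneg)
    then show ?thesis by blast
  next
    case 3
    have ng: "normv (tv a b (\<alpha>, \<beta>)) = g" using e gn by simp
    have "normv (tv a b (\<alpha>, \<beta>)) = normv (vadd a b) \<or> inT a (vadd a b) (normv (tv a b (\<alpha>, \<beta>)))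
     \<or> inT (vadd a b) b (normv (tv a b (\<alpha>, \<beta>)))"
      by (rule cover_pos) (use 3 c in auto)
    then show ?thesis unfolding ng by blast
  next
    case 4
    have "g = vneg (tv a b (- \<alpha>, - \<beta>))" using e tv_neg_coef[of a b "- \<alpha>" "- \<beta>"] by simp
    then have ng: "normv (tv a b (- \<alpha>, - \<beta>)) = g" using gn by (metis normv_vneg)
    have c': "coprime (- \<alpha>) (- \<beta>)" using c by simp
    have "normv (tv a b (- \<alpha>, - \<beta>)) = normv (vadd a b) \<or> inT a (vadd a b) (normv (tv a b (- \<alpha>, - \<beta>)))
     \<or> inT (vadd a b) b (normv (tv a b (- \<alpha>, - \<beta>)))"
      by (rule cover_pos) (use 4 c' in auto)
    then show ?thesis unfolding ng by blast
  next
    case 5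
    have ng: "normv (tv a b (- (- \<alpha>), \<beta>)) = g" using e gn by simp
    have c': "coprime (- \<alpha>) \<beta>" using c by simp
    have "inT b (vneg a) (normv (tv a b (- (- \<alpha>), \<beta>)))"
      by (rule cover_mixed) (use 5 c' in auto)
    then show ?thesis unfolding ng by blast
  next
    case 6
    have "g = vneg (tv a b (- \<alpha>, - \<beta>))" using e tv_neg_coef[of a b "- \<alpha>" "- \<beta>"] by simp
    then have ng: "normv (tv a b (- \<alpha>, - \<beta>)) = g" using gn by (metis normv_vneg)
    have c': "coprime \<alpha> (- \<beta>)" using c by simp
    have "inT b (vneg a) (normv (tv a b (- \<alpha>, - \<beta>)))"
      by (rule cover_mixed) (use 6 c' in auto)
    then show ?thesis unfolding ng by blast
  qed
qed


lemma normv_normv[simp]: "normv (normv z) = normv z"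
  using normv_cases[of z] by (metis normv_vneg)

lemma ev_normv[simp]: "ev (normv z) = ev z" unfolding ev_def lamv_def by simp
lemma lamv_normv[simp]: "lamv (normv z) = lamv z" unfolding lamv_def by simp

lemma okv_arc: "is_arc g \<Longrightarrow> okv g" unfolding is_arc_def okv_def by simp

lemma lamv_arc: "is_arc g \<Longrightarrow> lamv g = lam g" unfolding lamv_def using normv_arc by simp

lemma mm_bound: "\<bar>mm T D\<bar> \<le> (\<Sum>D'\<in>Pow {1..N}. \<bar>mm T D'\<bar>)"
proof (cases "D \<subseteq> {1..N}")
  case True
  then show ?thesis by (intro member_le_sum) auto
next
  case False
  then show ?thesis unfolding mm_def using gmul_out by (simp add: sum_nonneg)
qed

lemma tree_uniform:
  assumes d: "\<bar>det P Q\<bar> = 1" and asc: "ev (vsub P Q) \<le> ev (vadd P Q)" and L: "LDv k dd M"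
    and dd: "dd \<ge> 0" and Wb: "\<And>D. \<bar>mm {normv P, normv Q, normv (vsub P Q)} D\<bar> \<le> Wb" and eps: "\<epsilon> > 0"
  shows "\<exists>m. m \<ge> 0 \<and> (\<forall>B u v. B \<subseteq> {1..N} \<longrightarrow> card B = Suc k \<longrightarrow> sbn u v \<longrightarrow>
     \<bar>lamv (tv P Q (vadd u v)) B\<bar> \<le> m * ev (tv P Q (vadd u v)) powr (1 + (2*dd + \<epsilon>)))"
proof -
  let ?S = "{B. B \<subseteq> {1..N} \<and> card B = Suc k}"
  have finS: "finite ?S" by (rule finite_subset[of _ "Pow {1..N}"]) auto
  have "\<forall>B\<in>?S. \<exists>m. \<forall>u v. sbn u v \<longrightarrow>
     \<bar>lamv (tv P Q (vadd u v)) B\<bar> \<le> m * ev (tv P Q (vadd u v)) powr (1 + (2*dd + \<epsilon>))"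
    using tree_step[OF d asc L dd _ _ Wb eps] by blast
  from bchoice[OF this] obtain f where f: "\<forall>B\<in>?S. \<forall>u v. sbn u v \<longrightarrow>
     \<bar>lamv (tv P Q (vadd u v)) B\<bar> \<le> f B * ev (tv P Q (vadd u v)) powr (1 + (2*dd + \<epsilon>))"
    by blast
  define m where "m = (\<Sum>B\<in>?S. \<bar>f B\<bar>)"
  have m0: "m \<ge> 0" unfolding m_def by (simp add: sum_nonneg)
  have "\<bar>lamv (tv P Q (vadd u v)) B\<bar> \<le> m * ev (tv P Q (vadd u v)) powr (1 + (2*dd + \<epsilon>))"
    if B: "B \<subseteq> {1..N}" "card B = Suc k" and n: "sbn u v" for B u v
  proof -
    have BS: "B \<in> ?S" using B by simp
    have "f B \<le> m" unfolding m_def using member_le_sum[OF BS, of "\<lambda>B. \<bar>f B\<bar>"] finS by simp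
    then have "f B * ev (tv P Q (vadd u v)) powr (1 + (2*dd + \<epsilon>)) \<le> m * ev (tv P Q (vadd u v)) powr (1 + (2*dd + \<epsilon>))"
      by (intro mult_right_mono) auto
    moreover have "\<bar>lamv (tv P Q (vadd u v)) B\<bar> \<le> f B * ev (tv P Q (vadd u v)) powr (1 + (2*dd + \<epsilon>))"
      using f BS n by blast
    ultimately show ?thesis by linarith
  qed
  then show ?thesis using m0 by blast
qed


lemma tree_lower: assumes d: "\<bar>det P Q\<bar> = 1" and asc: "ev (vsub P Q) \<le> ev (vadd P Q)" and n: "sbn u v"
  shows "min (ev P) (ev Q) \<le> ev (tv P Q (vadd u v))"
proof -
  interpret r0: rl0 "Etr P Q" by (rule tree_rl0[OF d asc])
  have "r0.Emin \<le> Etr P Q (vadd u v)" using r0.Emin_le_s[OF n] .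
  moreover have "r0.Emin = min (ev P) (ev Q)" unfolding r0.Emin_def using Etr_node(1,2)[OF d sbn.root] by simp
  ultimately show ?thesis using Etr_node(3)[OF d n] by simp
qed

lemma powr_shift: fixes e E0 d d' :: real assumes "E0 > 0" "E0 \<le> e" "d \<le> d'"
  shows "e powr (1 + d) \<le> E0 powr (d - d') * e powr (1 + d')"
proof -
  have e0: "e > 0" using assms by simp
  have "e powr (d - d') \<le> E0 powr (d - d')" using assms by (intro powr_mono2') auto
  then have "e powr (d - d') * e powr (1 + d') \<le> E0 powr (d - d') * e powr (1 + d')"
    by (intro mult_right_mono) auto
  moreover have "e powr (d - d') * e powr (1 + d') = e powr (1 + d)"
  proof -
    have x: "(d - d') + (1 + d') = 1 + d" by simp
    show ?thesis by (simp only: powr_add[symmetric] x)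
  qed
  ultimately show ?thesis by simp
qed

lemma LD_all:
  assumes g: "good (a,b)" and H: "Ht (a,b) = h" and r: "red h (a,b)"
  shows "\<forall>\<delta>>0. \<exists>M. LDv k \<delta> M"
proof -
  let ?c = "vadd a b"
  have d0: "\<bar>det a b\<bar> = 1" using g unfolding good_def by simp
  have d1: "\<bar>det a ?c\<bar> = 1" using d0 by simp
  have d2: "\<bar>det ?c b\<bar> = 1" using d0 by simp
  have d3: "\<bar>det b (vneg a)\<bar> = 1" using d0 det_swap[of b a] by simp
  note asc = red_tree_asc[OF g H r]
  let ?M0 = "mm {normv a, normv b, normv ?c}"
  define Wb where "Wb = (\<Sum>D'\<in>Pow {1..N}. \<bar>?M0 D'\<bar>)"
  have s1: "{normv a, normv ?c, normv (vsub a ?c)} = {normv a, normv b, normv ?c}" by auto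
  have s2: "{normv ?c, normv b, normv (vsub ?c b)} = {normv a, normv b, normv ?c}" by auto
  have s3: "{normv b, normv (vneg a), normv (vsub b (vneg a))} = {normv a, normv b, normv ?c}"
  proof -
    have "vsub b (vneg a) = ?c" by (simp add: vsub_def vadd_def vneg_def)
    then show ?thesis by auto
  qed
  have W1: "\<bar>mm {normv a, normv ?c, normv (vsub a ?c)} D\<bar> \<le> Wb" for D unfolding s1 Wb_def by (rule mm_bound)
  have W2: "\<bar>mm {normv ?c, normv b, normv (vsub ?c b)} D\<bar> \<le> Wb" for D unfolding s2 Wb_def by (rule mm_bound)
  have W3: "\<bar>mm {normv b, normv (vneg a), normv (vsub b (vneg a))} D\<bar> \<le> Wb" for D unfolding s3 Wb_def by (rule mm_bound)
  define Em where "Em = min (ev a) (min (ev b) (ev ?c))"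
  have ok0: "okv a" "okv b" "okv ?c" using tri_facts[OF d0] by auto
  have Em0: "Em > 0" unfolding Em_def using ev_pos ok0 by simp
  have low: "Em \<le> ev z" if oz: "okv z" for z
  proof -
    have ga: "is_arc (normv z)" using is_arc_normv[OF oz] .
    have "normv z = normv a \<or> normv z = normv b \<or> normv z = normv ?c \<or> inT a ?c (normv z) \<or>
       inT ?c b (normv z) \<or> inT b (vneg a) (normv z)" using cover[OF d0 ga] by simp
    then show ?thesis
    proof (elim disjE)
      assume "normv z = normv a" then have "ev z = ev a" by (metis ev_normv) then show ?thesis unfolding Em_def by simp
    next
      assume "normv z = normv b" then have "ev z = ev b" by (metis ev_normv) then show ?thesis unfolding Em_def by simp
    next
      assume "normv z = normv ?c" then have "ev z = ev ?c" by (metis ev_normv) then show ?thesis unfolding Em_def by simp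
    next
      assume "inT a ?c (normv z)"
      then obtain u v where n: "sbn u v" "normv z = normv (tv a ?c (vadd u v))" unfolding inT_def by blast
      then have "ev z = ev (tv a ?c (vadd u v))" by (metis ev_normv)
      then show ?thesis using tree_lower[OF d1 asc(1) n(1)] unfolding Em_def by simp
    next
      assume "inT ?c b (normv z)"
      then obtain u v where n: "sbn u v" "normv z = normv (tv ?c b (vadd u v))" unfolding inT_def by blast
      then have "ev z = ev (tv ?c b (vadd u v))" by (metis ev_normv)
      then show ?thesis using tree_lower[OF d2 asc(2) n(1)] unfolding Em_def by simp
    next
      assume "inT b (vneg a) (normv z)"
      then obtain u v where n: "sbn u v" "normv z = normv (tv b (vneg a) (vadd u v))" unfolding inT_def by blast
      then have "ev z = ev (tv b (vneg a) (vadd u v))" by (metis ev_normv)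
      then show ?thesis using tree_lower[OF d3 asc(3) n(1)] unfolding Em_def by simp
    qed
  qed
  show ?thesis
  proof (induction k)
    case 0
    show ?case
    proof (intro allI impI)
      fix \<delta> :: real assume dp: "\<delta> > 0"
      have "LDv 0 \<delta> (Em powr (- \<delta>))"
        unfolding LDv_def
      proof (intro allI impI)
        fix z B assume oz: "okv z" and B: "B \<subseteq> {1..N}" "card B \<le> 0"
        have fB: "finite B" using B(1) finite_subset by blast
        have Be: "B = {}" using B(2) fB by simp
        have ep: "ev z > 0" using ev_pos[OF oz] .
        have "ev z powr (1 + 0) \<le> Em powr (0 - \<delta>) * ev z powr (1 + \<delta>)"
          using powr_shift[OF Em0 low[OF oz], of 0 \<delta>] dp by simp
        then show "\<bar>lamv z B\<bar> \<le> Em powr (- \<delta>) * ev z powr (1 + \<delta>)"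
          using ep unfolding Be by (simp add: ev_def)
      qed
      then show "\<exists>M. LDv 0 \<delta> M" by blast
    qed
  next
    case (Suc k)
    show ?case
    proof (intro allI impI)
      fix \<delta> :: real assume dp: "\<delta> > 0"
      obtain M where L: "LDv k (\<delta>/3) M" using Suc.IH dp by (meson divide_pos_pos zero_less_numeral)
      have dd: "\<delta>/3 \<ge> 0" "\<delta>/3 > 0" using dp by auto
      have ex: "2 * (\<delta>/3) + \<delta>/3 = \<delta>" by simp
      obtain m1 where m1: "m1 \<ge> 0" "\<forall>B u v. B \<subseteq> {1..N} \<longrightarrow> card B = Suc k \<longrightarrow> sbn u v \<longrightarrow>
         \<bar>lamv (tv a ?c (vadd u v)) B\<bar> \<le> m1 * ev (tv a ?c (vadd u v)) powr (1 + \<delta>)"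
        using tree_uniform[OF d1 asc(1) L dd(1) W1 dd(2)] unfolding ex by blast
      obtain m2 where m2: "m2 \<ge> 0" "\<forall>B u v. B \<subseteq> {1..N} \<longrightarrow> card B = Suc k \<longrightarrow> sbn u v \<longrightarrow>
         \<bar>lamv (tv ?c b (vadd u v)) B\<bar> \<le> m2 * ev (tv ?c b (vadd u v)) powr (1 + \<delta>)"
        using tree_uniform[OF d2 asc(2) L dd(1) W2 dd(2)] unfolding ex by blast
      obtain m3 where m3: "m3 \<ge> 0" "\<forall>B u v. B \<subseteq> {1..N} \<longrightarrow> card B = Suc k \<longrightarrow> sbn u v \<longrightarrow>
         \<bar>lamv (tv b (vneg a) (vadd u v)) B\<bar> \<le> m3 * ev (tv b (vneg a) (vadd u v)) powr (1 + \<delta>)"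
        using tree_uniform[OF d3 asc(3) L dd(1) W3 dd(2)] unfolding ex by blast
      define Sfin where "Sfin = (\<Sum>B\<in>Pow {1..N}. \<bar>lamv a B\<bar> + \<bar>lamv b B\<bar> + \<bar>lamv ?c B\<bar>)"
      define mf where "mf = Sfin * Em powr (- (1 + \<delta>))"
      define ml where "ml = \<bar>M\<bar> * Em powr (\<delta>/3 - \<delta>)"
      define M' where "M' = m1 + m2 + m3 + mf + ml"
      have Sf0: "Sfin \<ge> 0" unfolding Sfin_def by (simp add: sum_nonneg)
      have mf0: "mf \<ge> 0" unfolding mf_def using Sf0 by simp
      have ml0: "ml \<ge> 0" unfolding ml_def by simp
      have mono: "\<bar>x\<bar> \<le> M' * t" if "\<bar>x\<bar> \<le> m * t" "m \<le> M'" "t \<ge> 0" for x m t :: real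
        using that by (meson mult_right_mono order_trans)
      have "LDv (Suc k) \<delta> M'"
        unfolding LDv_def
      proof (intro allI impI)
        fix z B assume oz: "okv z" and B: "B \<subseteq> {1..N}" "card B \<le> Suc k"
        have ep: "ev z > 0" using ev_pos[OF oz] .
        have t0: "ev z powr (1 + \<delta>) \<ge> 0" by simp
        show "\<bar>lamv z B\<bar> \<le> M' * ev z powr (1 + \<delta>)"
        proof (cases "card B \<le> k")
          case True
          have "\<bar>lamv z B\<bar> \<le> M * ev z powr (1 + \<delta>/3)" using LDv_D[OF L oz B(1) True] .
          also have "\<dots> \<le> \<bar>M\<bar> * ev z powr (1 + \<delta>/3)" by (intro mult_right_mono) auto
          also have "\<dots> \<le> \<bar>M\<bar> * (Em powr (\<delta>/3 - \<delta>) * ev z powr (1 + \<delta>))"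
            using powr_shift[OF Em0 low[OF oz], of "\<delta>/3" \<delta>] dp by (intro mult_left_mono) auto
          also have "\<dots> = ml * ev z powr (1 + \<delta>)" unfolding ml_def by simp
          finally show ?thesis using mono[of _ ml] m1 m2 m3 mf0 t0 unfolding M'_def by simp
        next
          case False
          then have cB: "card B = Suc k" using B(2) by simp
          have ga: "is_arc (normv z)" using is_arc_normv[OF oz] .
          have "normv z = normv a \<or> normv z = normv b \<or> normv z = normv ?c \<or> inT a ?c (normv z) \<or>
             inT ?c b (normv z) \<or> inT b (vneg a) (normv z)" using cover[OF d0 ga] by simp
          then consider (I1) "inT a ?c (normv z)" | (I2) "inT ?c b (normv z)" | (I3) "inT b (vneg a) (normv z)"
            | (T0) "normv z = normv a \<or> normv z = normv b \<or> normv z = normv ?c" by blast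
          then show ?thesis
          proof cases
            case I1
            assume "inT a ?c (normv z)"
            then obtain u v where n: "sbn u v" "normv z = normv (tv a ?c (vadd u v))" unfolding inT_def by blast
            then have e1: "lamv z = lamv (tv a ?c (vadd u v))" "ev z = ev (tv a ?c (vadd u v))"
              by (metis lamv_normv, metis ev_normv)
            have "\<bar>lamv z B\<bar> \<le> m1 * ev z powr (1 + \<delta>)" using m1(2) B(1) cB n(1) unfolding e1 by blast
            then show ?thesis using mono m2 m3 mf0 ml0 t0 unfolding M'_def by simp
          next
            case I2
            assume "inT ?c b (normv z)"
            then obtain u v where n: "sbn u v" "normv z = normv (tv ?c b (vadd u v))" unfolding inT_def by blast
            then have e1: "lamv z = lamv (tv ?c b (vadd u v))" "ev z = ev (tv ?c b (vadd u v))"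
              by (metis lamv_normv, metis ev_normv)
            have "\<bar>lamv z B\<bar> \<le> m2 * ev z powr (1 + \<delta>)" using m2(2) B(1) cB n(1) unfolding e1 by blast
            then show ?thesis using mono m1 m3 mf0 ml0 t0 unfolding M'_def by simp
          next
            case I3
            assume "inT b (vneg a) (normv z)"
            then obtain u v where n: "sbn u v" "normv z = normv (tv b (vneg a) (vadd u v))" unfolding inT_def by blast
            then have e1: "lamv z = lamv (tv b (vneg a) (vadd u v))" "ev z = ev (tv b (vneg a) (vadd u v))"
              by (metis lamv_normv, metis ev_normv)
            have "\<bar>lamv z B\<bar> \<le> m3 * ev z powr (1 + \<delta>)" using m3(2) B(1) cB n(1) unfolding e1 by blast
            then show ?thesis using mono m1 m2 mf0 ml0 t0 unfolding M'_def by simp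
          next
            case T0
            assume z0: "normv z = normv a \<or> normv z = normv b \<or> normv z = normv ?c"
            have "\<bar>lamv z B\<bar> \<le> \<bar>lamv a B\<bar> + \<bar>lamv b B\<bar> + \<bar>lamv ?c B\<bar>"
              using z0 by (elim disjE) (metis lamv_normv abs_ge_zero le_add_same_cancel1 le_add_same_cancel2 add_increasing add_increasing2)+
            also have "\<dots> \<le> Sfin" unfolding Sfin_def using B(1) by (intro member_le_sum) auto
            also have "\<dots> \<le> mf * ev z powr (1 + \<delta>)"
            proof -
              have "Em powr (1 + \<delta>) \<le> ev z powr (1 + \<delta>)" using low[OF oz] Em0 dp by (intro powr_mono2) auto
              moreover have "mf * Em powr (1 + \<delta>) = Sfin"
              proof -
                have x: "- (1 + \<delta>) + (1 + \<delta>) = 0" by simp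
                have "Em powr (- (1 + \<delta>)) * Em powr (1 + \<delta>) = 1"
                  using Em0 by (simp only: powr_add[symmetric] x) simp
                then show ?thesis unfolding mf_def by (simp add: mult.assoc)
              qed
              ultimately show ?thesis using mf0 by (metis mult_left_mono)
            qed
            finally show ?thesis using mono[of _ mf] m1 m2 m3 ml0 t0 unfolding M'_def by simp
          qed
        qed
      qed
      then show "\<exists>M. LDv (Suc k) \<delta> M" by blast
    qed
  qed
qed

end


theorem theorem5p5:
  fixes N :: nat and lam :: "arc \<Rightarrow> grass" and mu1 mu2 :: "arc set \<Rightarrow> grass"
    and al be :: bool
  assumes "super_teich_point N lam mu1 mu2 al be"
  shows "\<forall>\<delta>::real. \<delta> > 0 \<longrightarrow> (\<exists>M::real. M \<ge> 1 \<and>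
           (\<forall>a. is_arc a \<longrightarrow>
              gnorm N (soul (lam a)) \<le> M * \<bar>body (lam a)\<bar> powr (1 + \<delta>)))"
proof -
  interpret S: stp N lam mu1 mu2 al be by (rule stp.intro[OF assms])
  obtain q where q: "S.good q" "S.Ht q = S.Ht ((1,0),(0,1))" "S.red (S.Ht ((1,0),(0,1))) q"
    using S.descent[OF S.good_base] by blast
  obtain a0 b0 where ab: "q = (a0, b0)" by (cases q)
  have LD: "\<forall>\<delta>>0. \<exists>M. S.LDv N \<delta> M" using S.LD_all[of a0 b0] q unfolding ab by blast
  show ?thesis
  proof (intro allI impI)
    fix \<delta> :: real assume dp: "\<delta> > 0"
    obtain M where L: "S.LDv N \<delta> M" using LD dp by blast
    define M' where "M' = max 1 (2^N * M)"
    show "\<exists>M::real. M \<ge> 1 \<and> (\<forall>a. is_arc a \<longrightarrow> gnorm N (soul (lam a)) \<le> M * \<bar>body (lam a)\<bar> powr (1 + \<delta>))"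
    proof (intro exI conjI allI impI)
      show "M' \<ge> 1" unfolding M'_def by simp
      fix g assume ga: "is_arc g"
      have og: "okv g" using S.okv_arc[OF ga] .
      have lg: "S.lamv g = lam g" using S.lamv_arc[OF ga] .
      have eg: "S.ev g = body (lam g)" unfolding S.ev_def lg body_def ..
      have ep: "body (lam g) > 0" using S.ev_pos[OF og] eg by simp
      let ?t = "body (lam g) powr (1 + \<delta>)"
      have bnd: "\<bar>lam g A\<bar> \<le> M * ?t" if A: "A \<subseteq> {1..N}" for A
      proof -
        have "card A \<le> card {1..N}" by (rule card_mono) (use A in auto)
        then have "card A \<le> N" by simp
        then show ?thesis using S.LDv_D[OF L og A] lg eg by simp
      qed
      have Mt: "M * ?t \<ge> 0" using bnd[of "{}"] by simp
      have "gnorm N (soul (lam g)) = (\<Sum>A\<in>Pow {1..N}. \<bar>soul (lam g) A\<bar>)" unfolding gnorm_def ..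
      also have "\<dots> \<le> (\<Sum>A\<in>Pow {1..N}. M * ?t)"
      proof (rule sum_mono)
        fix A assume "A \<in> Pow {1..N}"
        then show "\<bar>soul (lam g) A\<bar> \<le> M * ?t" using bnd Mt unfolding soul_def by (cases "A = {}") auto
      qed
      also have "\<dots> = 2^N * M * ?t" by (simp add: card_Pow)
      also have "\<dots> \<le> M' * ?t" unfolding M'_def by (intro mult_right_mono) auto
      finally show "gnorm N (soul (lam g)) \<le> M' * \<bar>body (lam g)\<bar> powr (1 + \<delta>)" using ep by simp
    qed
  qed
qed


end
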